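(* Let $\mathbb{W}$ be a union of lines and ACM points in $\mathbb{P}^1\times\mathbb{P}^1$, let $I=I_{\mathbb{W}}$, and let $\mathcal{G}(I)=A\sqcup B$ be a partition of its standard generating set into nonempty sets. Let $J=\langle A\rangle$ and $K=\langle B\rangle$. Then $J\cap K$ is the defining ideal of a union of lines and ACM points.
   Context: $R=\mathbb{C}[x_0,x_1,y_0,y_1]$ is bigraded with $\deg x_i=(1,0)$, $\deg y_i=(0,1)$. For $A=[a_0:a_1]\in\mathbb{P}^1$ let $H_A=a_1x_0-a_0x_1$ and for $B=[b_0:b_1]$ let $V_B=b_1y_0-b_0y_1$; the same symbol denotes the form and its zero set (horizontal, resp. vertical, line or ruling). $I_{A\times B}=\langle H_A,V_B\rangle$, $I_{\mathbb{X}}=\bigcap_{P\in\mathbb{X}}I_P$, and a finite set $\mathbb{X}$ is ACM if $R/I_{\mathbb{X}}$ is Cohen–Macaulay. A union of lines and points is $\mathbb{W}=\{P_1,\dots,P_r,H_1,\dots,H_t,V_1,\dots,V_p\}$ (distinct points, horizontal lines and vertical lines, no point on any of the lines), with $\mathbb{X}_{\mathbb{W}}=\{P_1,\dots,P_r\}$ and $I_{\mathbb{W}}=\bigcap_iI_{P_i}\cap\bigcap_i\langle H_i\rangle\cap\bigcap_j\langle V_j\rangle$; it is a union of lines and ACM points if $\mathbb{X}_{\mathbb{W}}$ is ACM (only lines or only points allowed). For ACM $\mathbb{X}$ with $\pi_1(\mathbb{X})=\{A_1,\dots,A_h\}$, $\pi_2(\mathbb{X})=\{B_1,\dots,B_v\}$,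 labelled so that $\alpha_i=|\{P\in\mathbb{X}:P\in H_{A_i}\}|$ satisfies $\alpha_1\ge\cdots\ge\alpha_h$ and the counts on $V_{B_j}$ are nonincreasing, $I_{\mathbb{X}}$ is minimally generated by $\{H_{A_1}\cdots H_{A_h},\ V_{B_1}\cdots V_{B_v}\}\cup\{H_{A_1}\cdots H_{A_i}V_{B_1}\cdots V_{B_{\alpha_{i+1}}}:\alpha_{i+1}<\alpha_i\}$ (unique up to nonzero scalars). The standard generating set of $I_{\mathbb{W}}$ is this set for $\mathbb{X}=\mathbb{X}_{\mathbb{W}}$, each element multiplied by $\Lambda=\prod_iH_i\prod_jV_j$. *)

theory Defs
  imports Complex_Main "HOL-Library.Poly_Mapping"
begin

datatype var = X0 | X1 | Y0 | Y1

type_synonym poly = "(var \<Rightarrow>\<^sub>0 nat) \<Rightarrow>\<^sub>0 complex"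

definition Var :: "var \<Rightarrow> poly" where
  "Var v = Poly_Mapping.single (Poly_Mapping.single v 1) 1"

definition Const :: "complex \<Rightarrow> poly" where
  "Const c = Poly_Mapping.single 0 c"

definition tdeg :: "(var \<Rightarrow>\<^sub>0 nat) \<Rightarrow> nat" where
  "tdeg m = Poly_Mapping.lookup m X0 + Poly_Mapping.lookup m X1 + Poly_Mapping.lookup m Y0 + Poly_Mapping.lookup m Y1"

definition homog_pos :: "poly \<Rightarrow> bool" where
  "homog_pos f \<longleftrightarrow> f \<noteq> 0 \<and> (\<exists>d>0. \<forall>m\<in>Poly_Mapping.keys f. tdeg m = d)"

definition ideal_gen :: "poly set \<Rightarrow> poly set" where
  "ideal_gen S = {f. \<exists>F c. finite F \<and> F \<subseteq> S \<and> f = (\<Sum>s\<in>F. c s * s)}"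

definition nzd_mod :: "poly set \<Rightarrow> poly \<Rightarrow> bool" where
  "nzd_mod I f \<longleftrightarrow> (\<forall>g. f * g \<in> I \<longrightarrow> g \<in> I)"

text \<open>R/I is Cohen--Macaulay, for I the ideal of a finite set of points of P1 x P1
  (so Krull dim R/I = 2 when I is proper): either R/I = 0, or there is a homogeneous
  regular sequence of length 2 on R/I, i.e. depth R/I = 2 = dim R/I.\<close>
definition CM_points_ideal :: "poly set \<Rightarrow> bool" where
  "CM_points_ideal I \<longleftrightarrow> I = UNIV \<or>
     (\<exists>f g. homog_pos f \<and> homog_pos g \<and> nzd_mod I f \<and>
        nzd_mod (ideal_gen (I \<union> {f})) g \<and> ideal_gen (I \<union> {f, g}) \<noteq> UNIV)"

type_synonym p1 = "complex \<times> complex"  \<comment> \<open>homogeneous coordinates [a0:a1]\<close>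

definition valid_p1 :: "p1 \<Rightarrow> bool" where
  "valid_p1 a \<longleftrightarrow> a \<noteq> (0, 0)"

definition proj_eq :: "p1 \<Rightarrow> p1 \<Rightarrow> bool" where
  "proj_eq a b \<longleftrightarrow> fst a * snd b = snd a * fst b"

definition Hf :: "p1 \<Rightarrow> poly" where
  "Hf a = Const (snd a) * Var X0 - Const (fst a) * Var X1"

definition Vf :: "p1 \<Rightarrow> poly" where
  "Vf b = Const (snd b) * Var Y0 - Const (fst b) * Var Y1"

definition I_pt :: "p1 \<times> p1 \<Rightarrow> poly set" where
  "I_pt P = ideal_gen {Hf (fst P), Vf (snd P)}"

text \<open>W = (points, horizontal lines, vertical lines)\<close>
type_synonym lp = "(p1 \<times> p1) set \<times> p1 set \<times> p1 set"

definition pts :: "lp \<Rightarrow> (p1 \<times> p1) set" where "pts W = fst W"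
definition hls :: "lp \<Rightarrow> p1 set" where "hls W = fst (snd W)"
definition vls :: "lp \<Rightarrow> p1 set" where "vls W = snd (snd W)"

definition valid_lp :: "lp \<Rightarrow> bool" where
  "valid_lp W \<longleftrightarrow>
     finite (pts W) \<and> finite (hls W) \<and> finite (vls W) \<and>
     (\<forall>P\<in>pts W. valid_p1 (fst P) \<and> valid_p1 (snd P)) \<and>
     (\<forall>a\<in>hls W. valid_p1 a) \<and> (\<forall>b\<in>vls W. valid_p1 b) \<and>
     (\<forall>P\<in>pts W. \<forall>Q\<in>pts W. P \<noteq> Q \<longrightarrow>
         \<not> (proj_eq (fst P) (fst Q) \<and> proj_eq (snd P) (snd Q))) \<and>
     (\<forall>a\<in>hls W. \<forall>a'\<in>hls W. a \<noteq> a' \<longrightarrow> \<not> proj_eq a a') \<and>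
     (\<forall>b\<in>vls W. \<forall>b'\<in>vls W. b \<noteq> b' \<longrightarrow> \<not> proj_eq b b') \<and>
     (\<forall>P\<in>pts W. \<forall>a\<in>hls W. \<not> proj_eq (fst P) a) \<and>
     (\<forall>P\<in>pts W. \<forall>b\<in>vls W. \<not> proj_eq (snd P) b)"

definition I_W :: "lp \<Rightarrow> poly set" where
  "I_W W = {f. (\<forall>P\<in>pts W. f \<in> I_pt P) \<and> (\<forall>a\<in>hls W. f \<in> ideal_gen {Hf a}) \<and>
               (\<forall>b\<in>vls W. f \<in> ideal_gen {Vf b})}"

definition I_X :: "(p1 \<times> p1) set \<Rightarrow> poly set" where
  "I_X X = I_W (X, {}, {})"

definition ACM :: "(p1 \<times> p1) set \<Rightarrow> bool" where
  "ACM X \<longleftrightarrow> CM_points_ideal (I_X X)"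

definition union_lines_ACM_points :: "lp \<Rightarrow> bool" where
  "union_lines_ACM_points W \<longleftrightarrow> valid_lp W \<and> ACM (pts W)"

text \<open>As is a labelling A_1..A_h of pi_1(X) (0-indexed) with nonincreasing counts,
  and likewise Bs for pi_2(X).\<close>
definition good_labelling :: "(p1 \<times> p1) set \<Rightarrow> ((p1 \<times> p1) \<Rightarrow> p1) \<Rightarrow> p1 list \<Rightarrow> bool" where
  "good_labelling X pr As \<longleftrightarrow>
     (\<forall>a\<in>set As. valid_p1 a) \<and>
     (\<forall>i<length As. \<forall>j<length As. i \<noteq> j \<longrightarrow> \<not> proj_eq (As!i) (As!j)) \<and>
     (\<forall>P\<in>X. \<exists>a\<in>set As. proj_eq (pr P) a) \<and>
     (\<forall>a\<in>set As. \<exists>P\<in>X. proj_eq (pr P) a) \<and>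
     (\<forall>i j. i \<le> j \<longrightarrow> j < length As \<longrightarrow>
        card {P\<in>X. proj_eq (pr P) (As!j)} \<le> card {P\<in>X. proj_eq (pr P) (As!i)})"

definition alpha :: "(p1 \<times> p1) set \<Rightarrow> p1 list \<Rightarrow> nat \<Rightarrow> nat" where
  "alpha X As i = card {P\<in>X. proj_eq (fst P) (As!i)}"

text \<open>minimal generators of I_X for given labellings (0-indexed version of the paper's list)\<close>
definition gens_X :: "(p1 \<times> p1) set \<Rightarrow> p1 list \<Rightarrow> p1 list \<Rightarrow> poly set" where
  "gens_X X As Bs =
     {(\<Prod>k<length As. Hf (As!k)), (\<Prod>k<length Bs. Vf (Bs!k))} \<union>
     {(\<Prod>k<i. Hf (As!k)) * (\<Prod>k<alpha X As i. Vf (Bs!k)) | i.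
         0 < i \<and> i < length As \<and> alpha X As i < alpha X As (i - 1)}"

definition Lambda :: "lp \<Rightarrow> poly" where
  "Lambda W = (\<Prod>a\<in>hls W. Hf a) * (\<Prod>b\<in>vls W. Vf b)"

definition standard_gens :: "lp \<Rightarrow> poly set \<Rightarrow> bool" where
  "standard_gens W G \<longleftrightarrow>
     (\<exists>As Bs. good_labelling (pts W) fst As \<and> good_labelling (pts W) snd Bs \<and>
        G = (\<lambda>f. Lambda W * f) ` gens_X (pts W) As Bs)"

end

theory Submission
  imports Defs
begin

instantiation var :: linorder
begin
fun var_idx :: "var \<Rightarrow> nat" where
  "var_idx X0 = 0" | "var_idx X1 = 1" | "var_idx Y0 = 2" | "var_idx Y1 = 3"
definition less_eq_var :: "var \<Rightarrow> var \<Rightarrow> bool" where "less_eq_var a b = (var_idx a \<le> var_idx b)"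
definition less_var :: "var \<Rightarrow> var \<Rightarrow> bool" where "less_var a b = (var_idx a < var_idx b)"
instance proof
  fix x y z :: var
  show "x < y \<longleftrightarrow> x \<le> y \<and> \<not> y \<le> x" by (auto simp: less_eq_var_def less_var_def)
  show "x \<le> x" by (simp add: less_eq_var_def)
  show "x \<le> y \<Longrightarrow> y \<le> z \<Longrightarrow> x \<le> z" by (simp add: less_eq_var_def)
  show "x \<le> y \<Longrightarrow> y \<le> x \<Longrightarrow> x = y" by (cases x; cases y; simp add: less_eq_var_def)
  show "x \<le> y \<or> y \<le> x" by (auto simp: less_eq_var_def)
qed
end

definition is_ideal :: "poly set \<Rightarrow> bool" where
  "is_ideal I \<longleftrightarrow> 0 \<in> I \<and> (\<forall>x\<in>I. \<forall>y\<in>I. x + y \<in> I) \<and> (\<forall>r. \<forall>x\<in>I. r * x \<in> I)"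

lemma is_idealI:
  assumes "0 \<in> I" "\<And>x y. x \<in> I \<Longrightarrow> y \<in> I \<Longrightarrow> x + y \<in> I" "\<And>r x. x \<in> I \<Longrightarrow> r * x \<in> I"
  shows "is_ideal I"
  using assms unfolding is_ideal_def by blast

lemma ideal_0: "is_ideal I \<Longrightarrow> 0 \<in> I" by (simp add: is_ideal_def)
lemma ideal_add: "is_ideal I \<Longrightarrow> x \<in> I \<Longrightarrow> y \<in> I \<Longrightarrow> x + y \<in> I" by (simp add: is_ideal_def)
lemma ideal_mult: "is_ideal I \<Longrightarrow> x \<in> I \<Longrightarrow> r * x \<in> I" by (simp add: is_ideal_def)
lemma ideal_mult2: "is_ideal I \<Longrightarrow> x \<in> I \<Longrightarrow> x * r \<in> I" 
  by (metis ideal_mult mult.commute)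
lemma ideal_uminus: "is_ideal I \<Longrightarrow> x \<in> I \<Longrightarrow> - x \<in> I"
  using ideal_mult[of I x "-1"] by simp
lemma ideal_diff: "is_ideal I \<Longrightarrow> x \<in> I \<Longrightarrow> y \<in> I \<Longrightarrow> x - y \<in> I"
  using ideal_add[of I x "-y"] ideal_uminus by simp
lemma ideal_sum: "is_ideal I \<Longrightarrow> (\<And>i. i \<in> F \<Longrightarrow> f i \<in> I) \<Longrightarrow> sum f F \<in> I"
proof (induction F rule: infinite_finite_induct)
  case (infinite A) then show ?case by (simp add: ideal_0)
next
  case empty then show ?case by (simp add: ideal_0)
next
  case (insert x F) then show ?case by (simp add: ideal_add)
qed

lemma ideal_gen_is_ideal: "is_ideal (ideal_gen S)"
proof (rule is_idealI)
  show "0 \<in> ideal_gen S" unfolding ideal_gen_def by (rule CollectI, rule exI[of _ "{}"]) auto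
next
  fix x y assume "x \<in> ideal_gen S" "y \<in> ideal_gen S"
  then obtain F c G d where F: "finite F" "F \<subseteq> S" "x = (\<Sum>s\<in>F. c s * s)"
    and G: "finite G" "G \<subseteq> S" "y = (\<Sum>s\<in>G. d s * s)" unfolding ideal_gen_def by (auto 0 0)
  define c' where "c' s = (if s \<in> F then c s else 0)" for s
  define d' where "d' s = (if s \<in> G then d s else 0)" for s
  have "x = (\<Sum>s\<in>F \<union> G. c' s * s)"
    unfolding F(3) c'_def by (rule sum.mono_neutral_cong_left) (use F G in auto)
  moreover have "y = (\<Sum>s\<in>F \<union> G. d' s * s)"
    unfolding G(3) d'_def by (rule sum.mono_neutral_cong_left) (use F G in auto)
  ultimately have "x + y = (\<Sum>s\<in>F \<union> G. (c' s + d' s) * s)"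
    by (simp add: sum.distrib distrib_right)
  then show "x + y \<in> ideal_gen S" unfolding ideal_gen_def
    by (intro CollectI exI[of _ "F \<union> G"] exI[of _ "\<lambda>s. c' s + d' s"]) (use F G in simp)
next
  fix r x assume "x \<in> ideal_gen S"
  then obtain F c where F: "finite F" "F \<subseteq> S" "x = (\<Sum>s\<in>F. c s * s)" unfolding ideal_gen_def by blast
  have "r * x = (\<Sum>s\<in>F. (r * c s) * s)" unfolding F(3) by (simp add: sum_distrib_left mult.assoc)
  then show "r * x \<in> ideal_gen S" unfolding ideal_gen_def
    by (intro CollectI exI[of _ F] exI[of _ "\<lambda>s. r * c s"]) (use F in simp)
qed

lemma ideal_gen_base: "s \<in> S \<Longrightarrow> s \<in> ideal_gen S"
  unfolding ideal_gen_def by (rule CollectI, rule exI[of _ "{s}"], rule exI[of _ "\<lambda>_. 1"]) auto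

lemma ideal_gen_least: "is_ideal I \<Longrightarrow> S \<subseteq> I \<Longrightarrow> ideal_gen S \<subseteq> I"
proof
  fix x assume I: "is_ideal I" "S \<subseteq> I" and "x \<in> ideal_gen S"
  then obtain F c where F: "finite F" "F \<subseteq> S" "x = (\<Sum>s\<in>F. c s * s)" unfolding ideal_gen_def by blast
  show "x \<in> I" unfolding F(3) using F I by (intro ideal_sum ideal_mult) auto
qed

lemma ideal_gen_mono: "S \<subseteq> T \<Longrightarrow> ideal_gen S \<subseteq> ideal_gen T"
  by (meson ideal_gen_base ideal_gen_is_ideal ideal_gen_least subset_iff)

lemma ideal_gen_subsetI: "(\<And>s. s \<in> S \<Longrightarrow> s \<in> ideal_gen T) \<Longrightarrow> ideal_gen S \<subseteq> ideal_gen T"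
  by (simp add: ideal_gen_is_ideal ideal_gen_least subsetI)

lemmas ideal_gen_simps = ideal_gen_is_ideal[THEN ideal_0] ideal_gen_is_ideal[THEN ideal_add]
  ideal_gen_is_ideal[THEN ideal_mult] ideal_gen_is_ideal[THEN ideal_mult2]
  ideal_gen_is_ideal[THEN ideal_diff] ideal_gen_is_ideal[THEN ideal_uminus]

lemma ideal_gen_insert: "ideal_gen (insert a S) = {a * x + y | x y. y \<in> ideal_gen S}"
proof
  show "ideal_gen (insert a S) \<subseteq> {a * x + y | x y. y \<in> ideal_gen S}"
  proof (rule ideal_gen_least)
    show "is_ideal {a * x + y | x y. y \<in> ideal_gen S}"
    proof (rule is_idealI)
      show "0 \<in> {a * x + y | x y. y \<in> ideal_gen S}"
        by (rule CollectI, rule exI[of _ 0], rule exI[of _ 0]) (simp add: ideal_gen_simps)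
    next
      fix u w assume "u \<in> {a * x + y | x y. y \<in> ideal_gen S}" "w \<in> {a * x + y | x y. y \<in> ideal_gen S}"
      then obtain x1 y1 x2 y2 where "u = a * x1 + y1" "y1 \<in> ideal_gen S" "w = a * x2 + y2" "y2 \<in> ideal_gen S" by blast
      then show "u + w \<in> {a * x + y | x y. y \<in> ideal_gen S}"
        by (intro CollectI exI[of _ "x1 + x2"] exI[of _ "y1 + y2"]) (simp add: ideal_gen_simps algebra_simps)
    next
      fix r u assume "u \<in> {a * x + y | x y. y \<in> ideal_gen S}"
      then obtain x1 y1 where "u = a * x1 + y1" "y1 \<in> ideal_gen S" by blast
      then show "r * u \<in> {a * x + y | x y. y \<in> ideal_gen S}"
        by (intro CollectI exI[of _ "r * x1"] exI[of _ "r * y1"]) (simp add: ideal_gen_simps algebra_simps)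
    qed
  next
    show "insert a S \<subseteq> {a * x + y | x y. y \<in> ideal_gen S}"
    proof
      fix s assume "s \<in> insert a S"
      then show "s \<in> {a * x + y | x y. y \<in> ideal_gen S}"
      proof
        assume "s = a" then show ?thesis by (intro CollectI exI[of _ 1] exI[of _ 0]) (simp add: ideal_gen_simps)
      next
        assume "s \<in> S" then show ?thesis by (intro CollectI exI[of _ 0] exI[of _ s]) (simp add: ideal_gen_base)
      qed
    qed
  qed
next
  show "{a * x + y | x y. y \<in> ideal_gen S} \<subseteq> ideal_gen (insert a S)"
  proof
    fix u assume "u \<in> {a * x + y | x y. y \<in> ideal_gen S}"
    then obtain x y where "u = a * x + y" "y \<in> ideal_gen S" by blast
    moreover have "y \<in> ideal_gen (insert a S)" using \<open>y \<in> ideal_gen S\<close> ideal_gen_mono[of S "insert a S"] by blast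
    moreover have "a \<in> ideal_gen (insert a S)" by (simp add: ideal_gen_base)
    ultimately show "u \<in> ideal_gen (insert a S)" by (simp add: ideal_gen_simps)
  qed
qed

lemma ideal_gen_empty: "ideal_gen {} = {0}"
  unfolding ideal_gen_def by auto

lemma ideal_gen_single: "ideal_gen {a} = {a * x | x. True}"
  by (simp add: ideal_gen_insert ideal_gen_empty)

lemma ideal_gen_two: "ideal_gen {a, b} = {a * x + b * y | x y. True}"
  unfolding ideal_gen_insert[of a "{b}"] ideal_gen_single by blast

lemma ideal_gen_three: "ideal_gen {a, b, c} = {a * x + b * y + c * z | x y z. True}"
  unfolding ideal_gen_insert[of a "{b,c}"] ideal_gen_two by (auto simp: add.assoc)

lemma in_ideal_single: "f \<in> ideal_gen {a} \<longleftrightarrow> a dvd f"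
  by (auto simp: ideal_gen_single dvd_def)

lemma ideal_gen_one: "1 \<in> S \<Longrightarrow> ideal_gen S = UNIV"
  using ideal_gen_base ideal_gen_is_ideal ideal_mult2 by fastforce

lemma ideal_gen_idem: "ideal_gen (ideal_gen S \<union> T) = ideal_gen (S \<union> T)"
proof
  show "ideal_gen (ideal_gen S \<union> T) \<subseteq> ideal_gen (S \<union> T)"
    by (rule ideal_gen_subsetI) (auto intro: ideal_gen_base subsetD[OF ideal_gen_mono[of S "S \<union> T"]])
  show "ideal_gen (S \<union> T) \<subseteq> ideal_gen (ideal_gen S \<union> T)"
    by (rule ideal_gen_mono) (auto simp: ideal_gen_base)
qed

definition prime_ideal :: "poly set \<Rightarrow> bool" where
  "prime_ideal I \<longleftrightarrow> (\<forall>f g. f * g \<in> I \<longrightarrow> f \<in> I \<or> g \<in> I)"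

lemma Const_0[simp]: "Const 0 = 0" by (simp add: Const_def)
lemma Const_1[simp]: "Const 1 = 1" by (simp add: Const_def)
lemma Const_add: "Const (a + b) = Const a + Const b" by (simp add: Const_def single_add)
lemma Const_mult: "Const (a * b) = Const a * Const b" by (simp add: Const_def mult_single)
lemma Const_uminus: "Const (- a) = - Const a" by (simp add: Const_def single_uminus)
lemma Const_diff: "Const (a - b) = Const a - Const b" by (simp add: Const_def single_diff)
lemma Const_eq_iff[simp]: "Const a = Const b \<longleftrightarrow> a = b" by (metis Const_def lookup_single_eq)
lemma Const_eq_0_iff[simp]: "Const a = 0 \<longleftrightarrow> a = 0" by (metis Const_0 Const_eq_iff)
lemma Const_pow: "Const (a ^ n) = Const a ^ n" by (induction n) (simp_all add: Const_mult)

section \<open>Evaluation homomorphisms\<close>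

definition mon :: "(var \<Rightarrow> poly) \<Rightarrow> (var \<Rightarrow>\<^sub>0 nat) \<Rightarrow> poly" where
  "mon \<sigma> m = \<sigma> X0 ^ Poly_Mapping.lookup m X0 * \<sigma> X1 ^ Poly_Mapping.lookup m X1 * \<sigma> Y0 ^ Poly_Mapping.lookup m Y0 * \<sigma> Y1 ^ Poly_Mapping.lookup m Y1"

definition ev :: "(var \<Rightarrow> poly) \<Rightarrow> poly \<Rightarrow> poly" where
  "ev \<sigma> f = (\<Sum>m\<in>Poly_Mapping.keys f. Const (Poly_Mapping.lookup f m) * mon \<sigma> m)"

lemma mon_0[simp]: "mon \<sigma> 0 = 1" by (simp add: mon_def)
lemma mon_add: "mon \<sigma> (a + b) = mon \<sigma> a * mon \<sigma> b"
  by (simp add: mon_def lookup_add power_add algebra_simps)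

lemma ev_superset:
  assumes "finite K" "Poly_Mapping.keys f \<subseteq> K"
  shows "ev \<sigma> f = (\<Sum>m\<in>K. Const (Poly_Mapping.lookup f m) * mon \<sigma> m)"
  unfolding ev_def
  by (rule sum.mono_neutral_left) (use assms in \<open>auto simp: in_keys_iff\<close>)

lemma ev_0[simp]: "ev \<sigma> 0 = 0" by (simp add: ev_def)

lemma ev_add: "ev \<sigma> (f + g) = ev \<sigma> f + ev \<sigma> g"
proof -
  let ?K = "Poly_Mapping.keys f \<union> Poly_Mapping.keys g"
  have k: "Poly_Mapping.keys (f + g) \<subseteq> ?K" by (rule keys_add)
  have "ev \<sigma> (f + g) = (\<Sum>m\<in>?K. Const (Poly_Mapping.lookup (f + g) m) * mon \<sigma> m)"
    by (rule ev_superset) (use k in auto)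
  also have "\<dots> = (\<Sum>m\<in>?K. Const (Poly_Mapping.lookup f m) * mon \<sigma> m) + (\<Sum>m\<in>?K. Const (Poly_Mapping.lookup g m) * mon \<sigma> m)"
    by (simp add: lookup_add Const_add distrib_right sum.distrib)
  also have "\<dots> = ev \<sigma> f + ev \<sigma> g"
    by (simp add: ev_superset[symmetric])
  finally show ?thesis .
qed

lemma ev_single: "ev \<sigma> (Poly_Mapping.single m c) = Const c * mon \<sigma> m"
  by (simp add: ev_def)

lemma update_eq_add: "c \<notin> Poly_Mapping.keys f \<Longrightarrow> Poly_Mapping.update c d f = f + Poly_Mapping.single c d"
  by (rule poly_mapping_eqI) (auto simp: lookup_update lookup_add lookup_single in_keys_iff when_def)

lemma ev_single_mult: "ev \<sigma> (Poly_Mapping.single a b * g) = Const b * mon \<sigma> a * ev \<sigma> g"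
proof (induction g rule: Poly_Mapping.update_induct)
  case const then show ?case by simp
next
  case (update f c d)
  then show ?case
    by (simp add: update_eq_add distrib_left ev_add mult_single ev_single mon_add Const_mult algebra_simps)
qed

lemma ev_mult: "ev \<sigma> (f * g) = ev \<sigma> f * ev \<sigma> g"
proof (induction f rule: Poly_Mapping.update_induct)
  case const then show ?case by simp
next
  case (update f c d)
  then show ?case
    by (simp add: update_eq_add distrib_right ev_add ev_single_mult ev_single)
qed

lemma ev_uminus: "ev \<sigma> (- f) = - ev \<sigma> f"
  using ev_add[of \<sigma> f "- f"] by (simp add: eq_neg_iff_add_eq_0 add.commute)

lemma ev_diff: "ev \<sigma> (f - g) = ev \<sigma> f - ev \<sigma> g"
  using ev_add[of \<sigma> f "- g"] ev_uminus[of \<sigma> g] by simp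

lemma ev_Const[simp]: "ev \<sigma> (Const c) = Const c"
  by (simp add: Const_def ev_single)

lemma ev_1[simp]: "ev \<sigma> 1 = 1"
  using ev_Const[of \<sigma> 1] by simp

lemma ev_Var[simp]: "ev \<sigma> (Var v) = \<sigma> v"
  by (cases v) (simp_all add: Var_def ev_single mon_def lookup_single)

lemma ev_sum: "ev \<sigma> (sum f A) = (\<Sum>a\<in>A. ev \<sigma> (f a))"
  by (induction A rule: infinite_finite_induct) (simp_all add: ev_add)

lemma ev_prod: "ev \<sigma> (prod f A) = (\<Prod>a\<in>A. ev \<sigma> (f a))"
  by (induction A rule: infinite_finite_induct) (simp_all add: ev_mult)

lemma ev_power: "ev \<sigma> (f ^ n) = ev \<sigma> f ^ n"
  by (induction n) (simp_all add: ev_mult)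

lemma ev_mon: "ev \<tau> (mon \<sigma> m) = mon (\<lambda>v. ev \<tau> (\<sigma> v)) m"
  by (simp add: mon_def ev_mult ev_power)

lemma ev_comp: "ev \<tau> (ev \<sigma> f) = ev (\<lambda>v. ev \<tau> (\<sigma> v)) f"
  unfolding ev_def[of \<sigma> f] ev_def[of "\<lambda>v. ev \<tau> (\<sigma> v)" f] by (simp add: ev_sum ev_mult ev_mon)

lemma Var_pow: "Var v ^ k = Poly_Mapping.single (Poly_Mapping.single v k) 1"
  by (induction k) (simp_all add: Var_def mult_single single_add[symmetric] add.commute)

lemma mon_Var: "mon Var m = Poly_Mapping.single m 1"
proof -
  have "mon Var m = Poly_Mapping.single (Poly_Mapping.single X0 (Poly_Mapping.lookup m X0) + Poly_Mapping.single X1 (Poly_Mapping.lookup m X1) + Poly_Mapping.single Y0 (Poly_Mapping.lookup m Y0) + Poly_Mapping.single Y1 (Poly_Mapping.lookup m Y1)) 1"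
    by (simp add: mon_def Var_pow mult_single)
  also have "Poly_Mapping.single X0 (Poly_Mapping.lookup m X0) + Poly_Mapping.single X1 (Poly_Mapping.lookup m X1) + Poly_Mapping.single Y0 (Poly_Mapping.lookup m Y0) + Poly_Mapping.single Y1 (Poly_Mapping.lookup m Y1) = m"
    by (rule poly_mapping_eqI) (case_tac k; simp add: lookup_add lookup_single)
  finally show ?thesis .
qed

lemma ev_Var_id[simp]: "ev Var f = f"
proof -
  have "ev Var f = (\<Sum>m\<in>Poly_Mapping.keys f. Poly_Mapping.single m (Poly_Mapping.lookup f m))"
    by (simp add: ev_def mon_Var Const_def mult_single)
  also have "\<dots> = f"
  proof (rule poly_mapping_eqI)
    fix k
    have "Poly_Mapping.lookup (\<Sum>m\<in>Poly_Mapping.keys f. Poly_Mapping.single m (Poly_Mapping.lookup f m)) k = (\<Sum>m\<in>Poly_Mapping.keys f. if m = k then Poly_Mapping.lookup f m else 0)"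
      by (simp add: lookup_sum lookup_single when_def)
    also have "\<dots> = Poly_Mapping.lookup f k"
      by (simp add: sum.delta' in_keys_iff)
    finally show "Poly_Mapping.lookup (\<Sum>m\<in>Poly_Mapping.keys f. Poly_Mapping.single m (Poly_Mapping.lookup f m)) k = Poly_Mapping.lookup f k" .
  qed
  finally show ?thesis .
qed

lemma ev_ext: "(\<And>v. \<sigma> v = \<tau> v) \<Longrightarrow> ev \<sigma> f = ev \<tau> f"
  by (metis ext)

lemma ev_inverse:
  assumes "\<And>v. ev \<tau> (\<sigma> v) = Var v"
  shows "ev \<tau> (ev \<sigma> f) = f"
  by (simp add: ev_comp assms)

lemma ev_ideal_gen: "x \<in> ideal_gen S \<Longrightarrow> ev \<sigma> x \<in> ideal_gen (ev \<sigma> ` S)"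
proof -
  assume "x \<in> ideal_gen S"
  then obtain F c where F: "finite F" "F \<subseteq> S" "x = (\<Sum>s\<in>F. c s * s)" unfolding ideal_gen_def by (auto 0 0)
  have "ev \<sigma> x = (\<Sum>s\<in>F. ev \<sigma> (c s) * ev \<sigma> s)" unfolding F(3) by (simp add: ev_sum ev_mult)
  also have "\<dots> \<in> ideal_gen (ev \<sigma> ` S)"
    by (rule ideal_sum[OF ideal_gen_is_ideal], rule ideal_mult[OF ideal_gen_is_ideal], rule ideal_gen_base) (use F in auto)
  finally show ?thesis .
qed

lemma ev_ideal_gen_sub:
  assumes "x \<in> ideal_gen S" "\<And>s. s \<in> S \<Longrightarrow> ev \<sigma> s \<in> ideal_gen T"
  shows "ev \<sigma> x \<in> ideal_gen T"
  using ev_ideal_gen[OF assms(1), of \<sigma>] ideal_gen_subsetI[of "ev \<sigma> ` S" T] assms(2) by blast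

lemma ev_kill:
  assumes "x \<in> ideal_gen S" "\<And>s. s \<in> S \<Longrightarrow> ev \<sigma> s = 0"
  shows "ev \<sigma> x = 0"
  using ev_ideal_gen_sub[OF assms(1), of \<sigma> "{}"] assms(2) by (simp add: ideal_gen_empty)

lemma prime_transport:
  assumes inv: "\<And>v. ev \<tau> (\<sigma> v) = Var v"
    and ST: "\<And>s. s \<in> S \<Longrightarrow> ev \<sigma> s \<in> ideal_gen T"
    and TS: "\<And>t. t \<in> T \<Longrightarrow> ev \<tau> t \<in> ideal_gen S"
    and P: "prime_ideal (ideal_gen T)"
  shows "prime_ideal (ideal_gen S)"
  unfolding prime_ideal_def
proof (intro allI impI)
  fix f g assume "f * g \<in> ideal_gen S"
  then have "ev \<sigma> f * ev \<sigma> g \<in> ideal_gen T" using ev_ideal_gen_sub[OF _ ST] by (metis ev_mult)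
  then have "ev \<sigma> f \<in> ideal_gen T \<or> ev \<sigma> g \<in> ideal_gen T" using P unfolding prime_ideal_def by blast
  then show "f \<in> ideal_gen S \<or> g \<in> ideal_gen S"
    using ev_ideal_gen_sub[OF _ TS] ev_inverse[OF inv] by metis
qed

lemma cong_mult: "is_ideal I \<Longrightarrow> a - b \<in> I \<Longrightarrow> c - d \<in> I \<Longrightarrow> a * c - b * d \<in> I"
proof -
  assume I: "is_ideal I" "a - b \<in> I" "c - d \<in> I"
  have "a * c - b * d = (a - b) * c + b * (c - d)" by (simp add: algebra_simps)
  then show ?thesis using I by (simp add: ideal_add ideal_mult ideal_mult2)
qed

lemma cong_pow: "is_ideal I \<Longrightarrow> a - b \<in> I \<Longrightarrow> a ^ n - b ^ n \<in> I"
  by (induction n) (simp_all add: ideal_0 cong_mult)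

lemma ev_congr:
  assumes I: "is_ideal I" and v: "\<And>v. Var v - \<sigma> v \<in> I"
  shows "f - ev \<sigma> f \<in> I"
proof -
  have m: "mon Var m - mon \<sigma> m \<in> I" for m
    unfolding mon_def by (intro cong_mult cong_pow I v)
  have "f - ev \<sigma> f = ev Var f - ev \<sigma> f" by simp
  also have "\<dots> = (\<Sum>m\<in>Poly_Mapping.keys f. Const (Poly_Mapping.lookup f m) * (mon Var m - mon \<sigma> m))"
    unfolding ev_def by (simp add: sum_subtractf algebra_simps)
  also have "\<dots> \<in> I" by (intro ideal_sum[OF I] ideal_mult[OF I] m)
  finally show ?thesis .
qed

section \<open>Coordinate ideals\<close>

definition proj_U :: "var set \<Rightarrow> var \<Rightarrow> poly" where
  "proj_U U v = (if v \<in> U then 0 else Var v)"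

lemma coord_mem: "f \<in> ideal_gen (Var ` U) \<longleftrightarrow> ev (proj_U U) f = 0"
proof
  assume "f \<in> ideal_gen (Var ` U)"
  then show "ev (proj_U U) f = 0" by (rule ev_kill) (auto simp: proj_U_def)
next
  assume 0: "ev (proj_U U) f = 0"
  have "f - ev (proj_U U) f \<in> ideal_gen (Var ` U)"
    by (rule ev_congr[OF ideal_gen_is_ideal]) (auto simp: proj_U_def ideal_gen_base ideal_gen_simps)
  then show "f \<in> ideal_gen (Var ` U)" using 0 by simp
qed

lemma coord_prime: "prime_ideal (ideal_gen (Var ` U))"
  unfolding prime_ideal_def coord_mem by (simp add: ev_mult)

definition L2 :: "var \<Rightarrow> var \<Rightarrow> complex \<Rightarrow> complex \<Rightarrow> poly" where
  "L2 v1 v2 u w = Const u * Var v1 + Const w * Var v2"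

lemma Hf_L2: "Hf a = L2 X0 X1 (snd a) (- fst a)"
  by (simp add: Hf_def L2_def Const_uminus)
lemma Vf_L2: "Vf b = L2 Y0 Y1 (snd b) (- fst b)"
  by (simp add: Vf_def L2_def Const_uminus)

lemma L2_add: "L2 v1 v2 u w + L2 v1 v2 u' w' = L2 v1 v2 (u + u') (w + w')"
  by (simp add: L2_def Const_add algebra_simps)
lemma L2_smult: "Const c * L2 v1 v2 u w = L2 v1 v2 (c * u) (c * w)"
  by (simp add: L2_def Const_mult algebra_simps)
lemma L2_diff: "L2 v1 v2 u w - L2 v1 v2 u' w' = L2 v1 v2 (u - u') (w - w')"
  by (simp add: L2_def Const_diff algebra_simps)
lemma L2_Var1: "Var v1 = L2 v1 v2 1 0" by (simp add: L2_def)
lemma L2_Var2: "Var v2 = L2 v1 v2 0 1" by (simp add: L2_def)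

lemma Const_Var: "Const c * Var v = Poly_Mapping.single (Poly_Mapping.single v 1) c"
  by (simp add: Const_def Var_def mult_single)

lemma single_var_inj: "Poly_Mapping.single v (1::nat) = Poly_Mapping.single v' 1 \<longleftrightarrow> v = v'"
  by (metis lookup_single_eq lookup_single_not_eq zero_neq_one)

lemma single_var_inj': "Poly_Mapping.single v (Suc 0) = Poly_Mapping.single v' (Suc 0) \<longleftrightarrow> v = v'"
  using single_var_inj by simp

lemma lookup_L2:
  assumes "v1 \<noteq> v2"
  shows "Poly_Mapping.lookup (L2 v1 v2 u w) (Poly_Mapping.single v1 1) = u"
    and "Poly_Mapping.lookup (L2 v1 v2 u w) (Poly_Mapping.single v2 1) = w"
  using assms by (auto simp: L2_def Const_Var lookup_add lookup_single when_def single_var_inj single_var_inj')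

lemma L2_eq_iff: "v1 \<noteq> v2 \<Longrightarrow> L2 v1 v2 u w = L2 v1 v2 u' w' \<longleftrightarrow> u = u' \<and> w = w'"
  by (metis lookup_L2)

lemma L2_eq_0_iff: "v1 \<noteq> v2 \<Longrightarrow> L2 v1 v2 u w = 0 \<longleftrightarrow> u = 0 \<and> w = 0"
proof -
  assume "v1 \<noteq> v2"
  have "0 = L2 v1 v2 0 0" by (simp add: L2_def)
  then show ?thesis using L2_eq_iff[OF \<open>v1 \<noteq> v2\<close>, of u w 0 0] by simp
qed

lemma ev_L2: "ev \<sigma> (L2 v1 v2 u w) = Const u * \<sigma> v1 + Const w * \<sigma> v2"
  by (simp add: L2_def ev_add ev_mult)

lemma L2_in_ideal: "Var v1 \<in> ideal_gen S \<Longrightarrow> Var v2 \<in> ideal_gen S \<Longrightarrow> L2 v1 v2 u w \<in> ideal_gen S"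
  by (simp add: L2_def ideal_gen_simps)

lemma Const_Var_neq0: "c \<noteq> 0 \<Longrightarrow> Const c * Var v \<noteq> 0"
  by (simp add: Const_Var) (metis lookup_single_eq lookup_zero)

definition dd :: "p1 \<Rightarrow> complex" where
  "dd a = fst a * cnj (fst a) + snd a * cnj (snd a)"

lemma dd_nz: "valid_p1 a \<Longrightarrow> dd a \<noteq> 0"
proof
  assume v: "valid_p1 a" and 0: "dd a = 0"
  have "dd a = complex_of_real ((cmod (fst a))\<^sup>2 + (cmod (snd a))\<^sup>2)"
    unfolding dd_def of_real_add complex_norm_square by simp
  then have "(cmod (fst a))\<^sup>2 + (cmod (snd a))\<^sup>2 = 0" using 0 by (metis of_real_eq_0_iff)
  then have "fst a = 0" "snd a = 0" by (simp_all add: add_nonneg_eq_0_iff)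
  then show False using v by (cases a) (simp add: valid_p1_def)
qed

definition sig :: "p1 \<Rightarrow> p1 \<Rightarrow> var \<Rightarrow> poly" where
  "sig a b v = (case v of
     X0 \<Rightarrow> L2 X0 X1 (cnj (snd a) / dd a) (fst a / dd a)
   | X1 \<Rightarrow> L2 X0 X1 (- cnj (fst a) / dd a) (snd a / dd a)
   | Y0 \<Rightarrow> L2 Y0 Y1 (cnj (snd b) / dd b) (fst b / dd b)
   | Y1 \<Rightarrow> L2 Y0 Y1 (- cnj (fst b) / dd b) (snd b / dd b))"

definition tau :: "p1 \<Rightarrow> p1 \<Rightarrow> var \<Rightarrow> poly" where
  "tau a b v = (case v of
     X0 \<Rightarrow> L2 X0 X1 (snd a) (- fst a)
   | X1 \<Rightarrow> L2 X0 X1 (cnj (fst a)) (cnj (snd a))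
   | Y0 \<Rightarrow> L2 Y0 Y1 (snd b) (- fst b)
   | Y1 \<Rightarrow> L2 Y0 Y1 (cnj (fst b)) (cnj (snd b)))"

lemma tau_sig:
  assumes "valid_p1 a" "valid_p1 b"
  shows "ev (tau a b) (sig a b v) = Var v"
proof -
  have da: "dd a \<noteq> 0" and db: "dd b \<noteq> 0" using assms dd_nz by auto
  show ?thesis
  proof (cases v)
    case X0
    have "ev (tau a b) (sig a b v) = L2 X0 X1 (cnj (snd a) / dd a * snd a + fst a / dd a * cnj (fst a))
        (cnj (snd a) / dd a * (- fst a) + fst a / dd a * cnj (snd a))"
      by (simp add: X0 sig_def tau_def ev_L2 L2_smult L2_add)
    also have "\<dots> = L2 X0 X1 1 0"
      by (rule arg_cong2[where f="L2 X0 X1"]) (use da in \<open>(simp add: divide_simps; simp add: dd_def algebra_simps)+\<close>)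
    finally show ?thesis by (simp add: X0 L2_Var1[symmetric])
  next
    case X1
    have "ev (tau a b) (sig a b v) = L2 X0 X1 (- cnj (fst a) / dd a * snd a + snd a / dd a * cnj (fst a))
        (- cnj (fst a) / dd a * (- fst a) + snd a / dd a * cnj (snd a))"
      by (simp add: X1 sig_def tau_def ev_L2 L2_smult L2_add)
    also have "\<dots> = L2 X0 X1 0 1"
      by (rule arg_cong2[where f="L2 X0 X1"]) (use da in \<open>(simp add: divide_simps; simp add: dd_def algebra_simps)+\<close>)
    finally show ?thesis by (simp add: X1 L2_Var2[symmetric])
  next
    case Y0
    have "ev (tau a b) (sig a b v) = L2 Y0 Y1 (cnj (snd b) / dd b * snd b + fst b / dd b * cnj (fst b))
        (cnj (snd b) / dd b * (- fst b) + fst b / dd b * cnj (snd b))"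
      by (simp add: Y0 sig_def tau_def ev_L2 L2_smult L2_add)
    also have "\<dots> = L2 Y0 Y1 1 0"
      by (rule arg_cong2[where f="L2 Y0 Y1"]) (use db in \<open>(simp add: divide_simps; simp add: dd_def algebra_simps)+\<close>)
    finally show ?thesis by (simp add: Y0 L2_Var1[symmetric])
  next
    case Y1
    have "ev (tau a b) (sig a b v) = L2 Y0 Y1 (- cnj (fst b) / dd b * snd b + snd b / dd b * cnj (fst b))
        (- cnj (fst b) / dd b * (- fst b) + snd b / dd b * cnj (snd b))"
      by (simp add: Y1 sig_def tau_def ev_L2 L2_smult L2_add)
    also have "\<dots> = L2 Y0 Y1 0 1"
      by (rule arg_cong2[where f="L2 Y0 Y1"]) (use db in \<open>(simp add: divide_simps; simp add: dd_def algebra_simps)+\<close>)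
    finally show ?thesis by (simp add: Y1 L2_Var2[symmetric])
  qed
qed

lemma sig_Hf: "valid_p1 a \<Longrightarrow> ev (sig a b) (Hf a) = Var X0"
proof -
  assume "valid_p1 a"
  then have da: "dd a \<noteq> 0" using dd_nz by auto
  have "ev (sig a b) (Hf a) = L2 X0 X1 (snd a * (cnj (snd a) / dd a) + - fst a * (- cnj (fst a) / dd a))
        (snd a * (fst a / dd a) + - fst a * (snd a / dd a))"
    by (simp add: Hf_L2 sig_def ev_L2 L2_smult L2_add)
  also have "\<dots> = L2 X0 X1 1 0"
    by (rule arg_cong2[where f="L2 X0 X1"]) (use da in \<open>(simp add: divide_simps; simp add: dd_def algebra_simps)+\<close>)
  finally show ?thesis by (simp add: L2_Var1[symmetric])
qed

lemma sig_Vf: "valid_p1 b \<Longrightarrow> ev (sig a b) (Vf b) = Var Y0"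
proof -
  assume "valid_p1 b"
  then have db: "dd b \<noteq> 0" using dd_nz by auto
  have "ev (sig a b) (Vf b) = L2 Y0 Y1 (snd b * (cnj (snd b) / dd b) + - fst b * (- cnj (fst b) / dd b))
        (snd b * (fst b / dd b) + - fst b * (snd b / dd b))"
    by (simp add: Vf_L2 sig_def ev_L2 L2_smult L2_add)
  also have "\<dots> = L2 Y0 Y1 1 0"
    by (rule arg_cong2[where f="L2 Y0 Y1"]) (use db in \<open>(simp add: divide_simps; simp add: dd_def algebra_simps)+\<close>)
  finally show ?thesis by (simp add: L2_Var1[symmetric])
qed

lemma sig_Hf_any: "ev (sig a b) (Hf c) \<in> ideal_gen S" if "Var X0 \<in> ideal_gen S" "Var X1 \<in> ideal_gen S"
proof -
  have "ev (sig a b) (Hf c) = L2 X0 X1 (snd c * (cnj (snd a) / dd a) + - fst c * (- cnj (fst a) / dd a))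
        (snd c * (fst a / dd a) + - fst c * (snd a / dd a))"
    by (simp add: Hf_L2 sig_def ev_L2 L2_smult L2_add)
  then show ?thesis using that L2_in_ideal by simp
qed

lemma tau_X0: "tau a b X0 = Hf a" by (simp add: tau_def Hf_L2)
lemma tau_Y0: "tau a b Y0 = Vf b" by (simp add: tau_def Vf_L2)
lemma tau_X1: "tau a b X1 \<in> ideal_gen S" if "Var X0 \<in> ideal_gen S" "Var X1 \<in> ideal_gen S"
  using that L2_in_ideal by (simp add: tau_def)

definition proj_eq' where "proj_eq' = proj_eq"

lemma X_in_ideal:
  assumes "Hf c \<in> ideal_gen S" "Hf a \<in> ideal_gen S" "\<not> proj_eq c a"
  shows "Var X0 \<in> ideal_gen S" "Var X1 \<in> ideal_gen S"
proof -
  define D where "D = snd c * fst a - fst c * snd a"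
  have D: "D \<noteq> 0" using assms(3) by (simp add: D_def proj_eq_def algebra_simps)
  have "Const (1 / D) * (Const (fst a) * Hf c - Const (fst c) * Hf a) =
        L2 X0 X1 (1 / D * (fst a * snd c - fst c * snd a)) (1 / D * (fst a * - fst c - fst c * - fst a))"
    by (simp add: Hf_L2 L2_smult L2_diff)
  also have "\<dots> = L2 X0 X1 1 0"
    by (rule arg_cong2[where f="L2 X0 X1"]) (use D in \<open>simp_all add: D_def field_simps\<close>)
  finally have "Var X0 = Const (1 / D) * (Const (fst a) * Hf c - Const (fst c) * Hf a)"
    by (simp add: L2_Var1[symmetric])
  then show "Var X0 \<in> ideal_gen S" using assms by (simp add: ideal_gen_simps)
  have "Const (1 / D) * (Const (snd a) * Hf c - Const (snd c) * Hf a) =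
        L2 X0 X1 (1 / D * (snd a * snd c - snd c * snd a)) (1 / D * (snd a * - fst c - snd c * - fst a))"
    by (simp add: Hf_L2 L2_smult L2_diff)
  also have "\<dots> = L2 X0 X1 0 1"
    by (rule arg_cong2[where f="L2 X0 X1"]) (use D in \<open>simp_all add: D_def field_simps\<close>)
  finally have "Var X1 = Const (1 / D) * (Const (snd a) * Hf c - Const (snd c) * Hf a)"
    by (simp add: L2_Var2[symmetric])
  then show "Var X1 \<in> ideal_gen S" using assms by (simp add: ideal_gen_simps)
qed

lemma valid01: "valid_p1 (0, 1)" by (simp add: valid_p1_def)

section \<open>Prime ideals\<close>

lemma cp1: "prime_ideal (ideal_gen {Var X0})" using coord_prime[of "{X0}"] by simp
lemma cp2: "prime_ideal (ideal_gen {Var Y0})" using coord_prime[of "{Y0}"] by simp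
lemma cp3: "prime_ideal (ideal_gen {Var X0, Var Y0})" using coord_prime[of "{X0, Y0}"] by simp
lemma cp4: "prime_ideal (ideal_gen {Var X0, Var X1, Var Y0})" using coord_prime[of "{X0, X1, Y0}"] by simp
lemma cp5: "prime_ideal (ideal_gen {Var X0, Var X1})" using coord_prime[of "{X0, X1}"] by simp

lemma prime_H: "valid_p1 a \<Longrightarrow> prime_ideal (ideal_gen {Hf a})"
  by (rule prime_transport[where \<sigma>="sig a (0,1)" and \<tau>="tau a (0,1)" and T="{Var X0}"])
     (auto simp: tau_sig valid01 sig_Hf tau_X0 ideal_gen_base cp1 cp2 cp3)

lemma prime_V: "valid_p1 b \<Longrightarrow> prime_ideal (ideal_gen {Vf b})"
  by (rule prime_transport[where \<sigma>="sig (0,1) b" and \<tau>="tau (0,1) b" and T="{Var Y0}"])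
     (auto simp: tau_sig valid01 sig_Vf tau_Y0 ideal_gen_base cp1 cp2 cp3)

lemma prime_HV: "valid_p1 a \<Longrightarrow> valid_p1 b \<Longrightarrow> prime_ideal (ideal_gen {Hf a, Vf b})"
  by (rule prime_transport[where \<sigma>="sig a b" and \<tau>="tau a b" and T="{Var X0, Var Y0}"])
     (auto simp: tau_sig sig_Hf sig_Vf tau_X0 tau_Y0 ideal_gen_base cp1 cp2 cp3)

lemma prime_HHV:
  assumes "valid_p1 c" "valid_p1 a" "valid_p1 b" "\<not> proj_eq c a"
  shows "prime_ideal (ideal_gen {Hf c, Hf a, Vf b})"
proof (rule prime_transport[where \<sigma>="sig c b" and \<tau>="tau c b" and T="{Var X0, Var X1, Var Y0}"])
  show "ev (tau c b) (sig c b v) = Var v" for v using assms tau_sig by auto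
  show "prime_ideal (ideal_gen ({Var X0, Var X1, Var Y0}))" by (rule cp4)
  show "ev (sig c b) s \<in> ideal_gen ({Var X0, Var X1, Var Y0})" if "s \<in> {Hf c, Hf a, Vf b}" for s
    using that assms by (auto simp: sig_Hf sig_Vf ideal_gen_base intro!: sig_Hf_any)
  have "Var X0 \<in> ideal_gen {Hf c, Hf a, Vf b}" "Var X1 \<in> ideal_gen {Hf c, Hf a, Vf b}"
    using X_in_ideal[of c "{Hf c, Hf a, Vf b}" a] assms by (auto simp: ideal_gen_base)
  then show "ev (tau c b) t \<in> ideal_gen {Hf c, Hf a, Vf b}" if "t \<in> {Var X0, Var X1, Var Y0}" for t
    using that by (auto simp: tau_X0 tau_Y0 ideal_gen_base intro!: tau_X1)
qed

lemma prime_HH: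
  assumes "valid_p1 c" "valid_p1 a" "\<not> proj_eq c a"
  shows "prime_ideal (ideal_gen {Hf c, Hf a})"
proof (rule prime_transport[where \<sigma>="sig c (0,1)" and \<tau>="tau c (0,1)" and T="{Var X0, Var X1}"])
  show "ev (tau c (0,1)) (sig c (0,1) v) = Var v" for v using assms tau_sig valid01 by auto
  show "prime_ideal (ideal_gen ({Var X0, Var X1}))" by (rule cp5)
  show "ev (sig c (0,1)) s \<in> ideal_gen ({Var X0, Var X1})" if "s \<in> {Hf c, Hf a}" for s
    using that assms by (auto simp: sig_Hf ideal_gen_base intro!: sig_Hf_any)
  have "Var X0 \<in> ideal_gen {Hf c, Hf a}" "Var X1 \<in> ideal_gen {Hf c, Hf a}"
    using X_in_ideal[of c "{Hf c, Hf a}" a] assms by (auto simp: ideal_gen_base)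
  then show "ev (tau c (0,1)) t \<in> ideal_gen {Hf c, Hf a}" if "t \<in> {Var X0, Var X1}" for t
    using that by (auto simp: tau_X0 ideal_gen_base intro!: tau_X1)
qed

lemma proj_eq_refl: "proj_eq a a" by (simp add: proj_eq_def mult.commute)
lemma proj_eq_sym: "proj_eq a b \<Longrightarrow> proj_eq b a" by (simp add: proj_eq_def mult.commute)
lemma proj_eq_trans:
  assumes "proj_eq a b" "proj_eq b c" "valid_p1 b"
  shows "proj_eq a c"
proof -
  have e1: "fst a * snd b = snd a * fst b" and e2: "fst b * snd c = snd b * fst c"
    using assms(1,2) unfolding proj_eq_def by auto
  have nz: "fst b \<noteq> 0 \<or> snd b \<noteq> 0" using assms(3) unfolding valid_p1_def by (cases b) auto
  show ?thesis
  proof (cases "fst b = 0")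
    case True
    then have "snd b \<noteq> 0" using nz by simp
    moreover have "fst a * snd b = 0" "snd b * fst c = 0" using e1 e2 True by auto
    ultimately have "fst a = 0" "fst c = 0" by auto
    then show ?thesis unfolding proj_eq_def by simp
  next
    case False
    have "fst b * (fst a * snd c) = fst a * (fst b * snd c)" by (simp only: mult.left_commute)
    also have "\<dots> = (fst a * snd b) * fst c" using e2 by (simp only: mult.assoc)
    also have "\<dots> = fst b * (snd a * fst c)" using e1 by (simp only: mult.commute mult.left_commute)
    finally show ?thesis using False unfolding proj_eq_def by simp
  qed
qed

definition psi :: "complex \<Rightarrow> complex \<Rightarrow> bool \<Rightarrow> complex \<Rightarrow> complex \<Rightarrow> bool \<Rightarrow> var \<Rightarrow> poly" where
  "psi p q ix r s iy v = (case v of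
      X0 \<Rightarrow> if ix then Const p * Var X0 else Var X0
    | X1 \<Rightarrow> if ix then Const q * Var X0 else Var X1
    | Y0 \<Rightarrow> if iy then Const r * Var Y0 else Var Y0
    | Y1 \<Rightarrow> if iy then Const s * Var Y0 else Var Y1)"

lemma Var_nz[simp]: "Var v \<noteq> 0"
  using Const_Var_neq0[of 1 v] by simp

lemma ev_psi_H: "ev (psi p q ix r s iy) (Hf c) =
   (if ix then Const (snd c * p - fst c * q) * Var X0 else Hf c)"
proof (cases ix)
  case True
  have "ev (psi p q ix r s iy) (Hf c) = Const (snd c) * (Const p * Var X0) - Const (fst c) * (Const q * Var X0)"
    unfolding Hf_def by (simp add: ev_diff ev_mult psi_def True)
  also have "\<dots> = Const (snd c * p - fst c * q) * Var X0"
    by (simp only: Const_diff Const_mult mult.assoc left_diff_distrib)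
  finally show ?thesis using True by simp
next
  case False
  have "ev (psi p q ix r s iy) (Hf c) = Const (snd c) * Var X0 - Const (fst c) * Var X1"
    unfolding Hf_def by (simp add: ev_diff ev_mult psi_def False)
  then show ?thesis using False by (simp add: Hf_def)
qed

lemma ev_psi_V: "ev (psi p q ix r s iy) (Vf c) =
   (if iy then Const (snd c * r - fst c * s) * Var Y0 else Vf c)"
proof (cases iy)
  case True
  have "ev (psi p q ix r s iy) (Vf c) = Const (snd c) * (Const r * Var Y0) - Const (fst c) * (Const s * Var Y0)"
    unfolding Vf_def by (simp add: ev_diff ev_mult psi_def True)
  also have "\<dots> = Const (snd c * r - fst c * s) * Var Y0"
    by (simp only: Const_diff Const_mult mult.assoc left_diff_distrib)
  finally show ?thesis using True by simp
next
  case False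
  have "ev (psi p q ix r s iy) (Vf c) = Const (snd c) * Var Y0 - Const (fst c) * Var Y1"
    unfolding Vf_def by (simp add: ev_diff ev_mult psi_def False)
  then show ?thesis using False by (simp add: Vf_def)
qed

lemma Hf_nz: "valid_p1 a \<Longrightarrow> Hf a \<noteq> 0"
  by (cases a) (auto simp: Hf_L2 L2_eq_0_iff valid_p1_def)
lemma Vf_nz: "valid_p1 a \<Longrightarrow> Vf a \<noteq> 0"
  by (cases a) (auto simp: Vf_L2 L2_eq_0_iff valid_p1_def)

lemma proj_coef: "snd c * fst a - fst c * snd a = 0 \<longleftrightarrow> proj_eq a c"
  by (auto simp: proj_eq_def algebra_simps)

lemma not_in_by_ev: "ev \<sigma> f \<noteq> 0 \<Longrightarrow> (\<And>s. s \<in> S \<Longrightarrow> ev \<sigma> s = 0) \<Longrightarrow> f \<notin> ideal_gen S"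
  using ev_kill by blast

lemma nH_H: "\<not> proj_eq a c \<Longrightarrow> Hf c \<notin> ideal_gen {Hf a}"
  by (rule not_in_by_ev[where \<sigma>="psi (fst a) (snd a) True 0 0 False"])
     (auto simp: ev_psi_H proj_coef Const_Var_neq0 proj_eq_def mult.commute)

lemma nV_H: "valid_p1 b \<Longrightarrow> Vf b \<notin> ideal_gen {Hf a}"
  by (rule not_in_by_ev[where \<sigma>="psi (fst a) (snd a) True 0 0 False"])
     (auto simp: ev_psi_H ev_psi_V Vf_nz mult.commute)

lemma nV_V: "\<not> proj_eq b d \<Longrightarrow> Vf d \<notin> ideal_gen {Vf b}"
  by (rule not_in_by_ev[where \<sigma>="psi 0 0 False (fst b) (snd b) True"])
     (auto simp: ev_psi_V proj_coef Const_Var_neq0 proj_eq_def mult.commute)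

lemma nH_V: "valid_p1 a \<Longrightarrow> Hf a \<notin> ideal_gen {Vf b}"
  by (rule not_in_by_ev[where \<sigma>="psi 0 0 False (fst b) (snd b) True"])
     (auto simp: ev_psi_H ev_psi_V Hf_nz mult.commute)

lemma nH_HV: "\<not> proj_eq a c \<Longrightarrow> Hf c \<notin> ideal_gen {Hf a, Vf b}"
  by (rule not_in_by_ev[where \<sigma>="psi (fst a) (snd a) True (fst b) (snd b) True"])
     (auto simp: ev_psi_H ev_psi_V proj_coef Const_Var_neq0 proj_eq_def mult.commute)

lemma nV_HV: "\<not> proj_eq b d \<Longrightarrow> Vf d \<notin> ideal_gen {Hf a, Vf b}"
  by (rule not_in_by_ev[where \<sigma>="psi (fst a) (snd a) True (fst b) (snd b) True"])
     (auto simp: ev_psi_H ev_psi_V proj_coef Const_Var_neq0 proj_eq_def mult.commute)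

lemma nV_HHV: "\<not> proj_eq b d \<Longrightarrow> Vf d \<notin> ideal_gen {Hf c, Hf a, Vf b}"
  by (rule not_in_by_ev[where \<sigma>="psi 0 0 True (fst b) (snd b) True"])
     (auto simp: ev_psi_H ev_psi_V proj_coef Const_Var_neq0 proj_eq_def mult.commute)

lemma nV_HH: "valid_p1 d \<Longrightarrow> Vf d \<notin> ideal_gen {Hf c, Hf a}"
  by (rule not_in_by_ev[where \<sigma>="psi 0 0 True 0 0 False"])
     (auto simp: ev_psi_H ev_psi_V Vf_nz)

definition zero_ev :: "var \<Rightarrow> poly" where "zero_ev v = 0"

lemma ev_zero_H[simp]: "ev zero_ev (Hf a) = 0" by (simp add: zero_ev_def Hf_def ev_diff ev_mult)
lemma ev_zero_V[simp]: "ev zero_ev (Vf a) = 0" by (simp add: zero_ev_def Vf_def ev_diff ev_mult)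

lemma one_notin: "(\<And>s. s \<in> S \<Longrightarrow> ev zero_ev s = 0) \<Longrightarrow> 1 \<notin> ideal_gen S"
  by (rule not_in_by_ev) auto

lemma prime_cancel: "prime_ideal I \<Longrightarrow> a \<notin> I \<Longrightarrow> a * x \<in> I \<Longrightarrow> x \<in> I"
  unfolding prime_ideal_def by blast

lemma prime_prod_notin:
  assumes "prime_ideal I" "1 \<notin> I" "\<And>i. i \<in> F \<Longrightarrow> f i \<notin> I"
  shows "prod f F \<notin> I"
  using assms(3)
proof (induction F rule: infinite_finite_induct)
  case (infinite A) then show ?case using assms(2) by simp
next
  case empty then show ?case using assms(2) by simp
next
  case (insert x F) then show ?case using assms(1) unfolding prime_ideal_def by auto
qed

section \<open>Lists of distinct points and staircase monomials\<close>

definition dist_list :: "p1 list \<Rightarrow> bool" where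
  "dist_list As \<longleftrightarrow> (\<forall>a\<in>set As. valid_p1 a) \<and>
     (\<forall>i<length As. \<forall>j<length As. i \<noteq> j \<longrightarrow> \<not> proj_eq (As!i) (As!j))"

lemma dl_valid: "dist_list As \<Longrightarrow> i < length As \<Longrightarrow> valid_p1 (As!i)"
  by (simp add: dist_list_def)
lemma dl_np: "dist_list As \<Longrightarrow> i < length As \<Longrightarrow> j < length As \<Longrightarrow> i \<noteq> j \<Longrightarrow> \<not> proj_eq (As!i) (As!j)"
  by (simp add: dist_list_def)

definition mH :: "p1 list \<Rightarrow> nat \<Rightarrow> nat \<Rightarrow> poly" where
  "mH As lo a = (\<Prod>k\<in>{lo..<a}. Hf (As!k))"
definition mV :: "p1 list \<Rightarrow> nat \<Rightarrow> poly" where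
  "mV Bs b = (\<Prod>k<b. Vf (Bs!k))"
definition mm :: "p1 list \<Rightarrow> p1 list \<Rightarrow> nat \<Rightarrow> nat \<times> nat \<Rightarrow> poly" where
  "mm As Bs lo s = mH As lo (fst s) * mV Bs (snd s)"

lemma mH_empty: "a \<le> lo \<Longrightarrow> mH As lo a = 1" by (simp add: mH_def)
lemma mH_split: "lo < a \<Longrightarrow> mH As lo a = Hf (As!lo) * mH As (Suc lo) a"
  by (simp add: mH_def prod.atLeast_Suc_lessThan)
lemma mV_0[simp]: "mV Bs 0 = 1" by (simp add: mV_def)
lemma mV_Suc: "mV Bs (Suc b) = mV Bs b * Vf (Bs!b)" by (simp add: mV_def)
lemma mV_in_V: "j < b \<Longrightarrow> mV Bs b \<in> ideal_gen {Vf (Bs!j)}"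
  unfolding in_ideal_single mV_def by (rule dvd_prodI) auto
lemma mV_dvd: "b \<le> b' \<Longrightarrow> mV Bs b dvd mV Bs b'"
  unfolding mV_def by (rule prod_dvd_prod_subset) auto
lemma mH_in_H: "lo \<le> i \<Longrightarrow> i < a \<Longrightarrow> mH As lo a \<in> ideal_gen {Hf (As!i)}"
  unfolding in_ideal_single mH_def by (rule dvd_prodI) auto

lemma I_pt_simp: "I_pt (a, b) = ideal_gen {Hf a, Vf b}" by (simp add: I_pt_def)

lemma V_in_pt: "Vf b \<in> I_pt (a, b)" by (simp add: I_pt_simp ideal_gen_base)
lemma H_in_pt: "Hf a \<in> I_pt (a, b)" by (simp add: I_pt_simp ideal_gen_base)

lemma ideal_gen_single_sub: "x \<in> ideal_gen {p} \<Longrightarrow> p \<in> ideal_gen S \<Longrightarrow> x \<in> ideal_gen S"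
  using ideal_gen_subsetI[of "{p}" S] by blast

lemma ideal_gen_mult_image:
  assumes "x \<in> ideal_gen (g ` S)"
  shows "c * x \<in> ideal_gen ((\<lambda>s. c * g s) ` S)"
proof -
  have "ideal_gen (g ` S) \<subseteq> {x. c * x \<in> ideal_gen ((\<lambda>s. c * g s) ` S)}"
  proof (rule ideal_gen_least)
    show "is_ideal {x. c * x \<in> ideal_gen ((\<lambda>s. c * g s) ` S)}"
      by (rule is_idealI) (simp_all add: ideal_gen_simps distrib_left mult.left_commute[of c])
    show "g ` S \<subseteq> {x. c * x \<in> ideal_gen ((\<lambda>s. c * g s) ` S)}"
      by (auto intro: ideal_gen_base)
  qed
  then show ?thesis using assms by blast
qed

context
  fixes As Bs :: "p1 list"
  assumes dA: "dist_list As" and dB: "dist_list Bs"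
begin

lemma pH: "i < length As \<Longrightarrow> prime_ideal (ideal_gen {Hf (As!i)})"
  using prime_H dl_valid dA by blast
lemma pV: "j < length Bs \<Longrightarrow> prime_ideal (ideal_gen {Vf (Bs!j)})"
  using prime_V dl_valid dB by blast
lemma pPt: "i < length As \<Longrightarrow> j < length Bs \<Longrightarrow> prime_ideal (I_pt (As!i, Bs!j))"
  using prime_HV dl_valid dA dB by (simp add: I_pt_simp)

lemma HnH: "i < length As \<Longrightarrow> k < length As \<Longrightarrow> i \<noteq> k \<Longrightarrow> Hf (As!k) \<notin> ideal_gen {Hf (As!i)}"
  using nH_H dl_np dA by blast
lemma HnV: "k < length As \<Longrightarrow> Hf (As!k) \<notin> ideal_gen {Vf b}"
  using nH_V dl_valid dA by blast
lemma VnV: "j < length Bs \<Longrightarrow> k < length Bs \<Longrightarrow> j \<noteq> k \<Longrightarrow> Vf (Bs!k) \<notin> ideal_gen {Vf (Bs!j)}"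
  using nV_V dl_np dB by blast
lemma HnPt: "i < length As \<Longrightarrow> k < length As \<Longrightarrow> i \<noteq> k \<Longrightarrow> Hf (As!k) \<notin> I_pt (As!i, b)"
  using nH_HV dl_np dA by (simp add: I_pt_simp)
lemma VnPt: "j < length Bs \<Longrightarrow> k < length Bs \<Longrightarrow> j \<noteq> k \<Longrightarrow> Vf (Bs!k) \<notin> I_pt (a, Bs!j)"
  using nV_HV dl_np dB by (simp add: I_pt_simp)

lemma line_gen:
  assumes "b \<le> length Bs"
    and P: "\<And>j. j < b \<Longrightarrow> prime_ideal (ideal_gen (insert (Vf (Bs!j)) E))"
    and O: "\<And>j. j < b \<Longrightarrow> 1 \<notin> ideal_gen (insert (Vf (Bs!j)) E)"
    and N: "\<And>j k. j < b \<Longrightarrow> k < b \<Longrightarrow> k \<noteq> j \<Longrightarrow> Vf (Bs!k) \<notin> ideal_gen (insert (Vf (Bs!j)) E)"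
    and F: "\<And>j. j < b \<Longrightarrow> f \<in> ideal_gen (insert (Vf (Bs!j)) E)"
  shows "f \<in> ideal_gen (insert (mV Bs b) E)"
  using assms
proof (induction b)
  case 0
  then show ?case by (simp add: ideal_gen_one)
next
  case (Suc b)
  have "f \<in> ideal_gen (insert (mV Bs b) E)" using Suc by auto
  then obtain r e where fe: "f = mV Bs b * r + e" "e \<in> ideal_gen E" by (auto simp: ideal_gen_insert)
  let ?I = "ideal_gen (insert (Vf (Bs!b)) E)"
  have eI: "e \<in> ?I" using fe(2) ideal_gen_mono[of E "insert (Vf (Bs!b)) E"] by blast
  have "f \<in> ?I" using Suc.prems(5) by simp
  then have "mV Bs b * r \<in> ?I" using eI fe(1) ideal_gen_simps(5)[of f "insert (Vf (Bs!b)) E" e] by simp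
  moreover have "mV Bs b \<notin> ?I" unfolding mV_def
    by (rule prime_prod_notin) (use Suc.prems in auto)
  ultimately have "r \<in> ?I" using prime_cancel Suc.prems(2) by blast
  then obtain x e' where re: "r = Vf (Bs!b) * x + e'" "e' \<in> ideal_gen E" by (auto simp: ideal_gen_insert)
  have "f = mV Bs (Suc b) * x + (mV Bs b * e' + e)"
    using fe(1) re(1) by (simp add: mV_Suc algebra_simps)
  moreover have "mV Bs b * e' + e \<in> ideal_gen E" using re(2) fe(2) by (simp add: ideal_gen_simps)
  ultimately show ?case by (auto simp: ideal_gen_insert)
qed

lemma prodV:
  assumes "b \<le> length Bs" "\<And>j. j < b \<Longrightarrow> f \<in> ideal_gen {Vf (Bs!j)}"
  shows "f \<in> ideal_gen {mV Bs b}"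
proof -
  have "f \<in> ideal_gen (insert (mV Bs b) {})"
  proof (rule line_gen[OF assms(1)])
    fix j assume j: "j < b"
    then have jl: "j < length Bs" using assms(1) by simp
    show "prime_ideal (ideal_gen (insert (Vf (Bs!j)) {}))" using pV[OF jl] by simp
    show "1 \<notin> ideal_gen (insert (Vf (Bs!j)) {})" by (rule one_notin) auto
    show "f \<in> ideal_gen (insert (Vf (Bs!j)) {})" using assms(2) j by simp
    fix k assume "k < b" "k \<noteq> j"
    then show "Vf (Bs!k) \<notin> ideal_gen (insert (Vf (Bs!j)) {})" using VnV[of j k] jl assms(1) by simp
  qed
  then show ?thesis by simp
qed

lemma line_HV:
  assumes "b \<le> length Bs" "valid_p1 a" "\<And>j. j < b \<Longrightarrow> f \<in> I_pt (a, Bs!j)"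
  shows "\<exists>q r. f = Hf a * q + mV Bs b * r"
proof -
  have "f \<in> ideal_gen (insert (mV Bs b) {Hf a})"
  proof (rule line_gen[OF assms(1)])
    fix j assume j: "j < b"
    then have jl: "j < length Bs" using assms(1) by simp
    have e: "insert (Vf (Bs!j)) {Hf a} = {Hf a, Vf (Bs!j)}" by auto
    show "prime_ideal (ideal_gen (insert (Vf (Bs!j)) {Hf a}))" unfolding e
      using prime_HV assms(2) dl_valid[OF dB jl] by blast
    show "1 \<notin> ideal_gen (insert (Vf (Bs!j)) {Hf a})" by (rule one_notin) auto
    show "f \<in> ideal_gen (insert (Vf (Bs!j)) {Hf a})" using assms(3) j e by (simp add: I_pt_simp)
    fix k assume "k < b" "k \<noteq> j"
    then show "Vf (Bs!k) \<notin> ideal_gen (insert (Vf (Bs!j)) {Hf a})" 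
      using VnPt[of j k a] jl assms(1) e by (simp add: I_pt_simp)
  qed
  then obtain x y where "f = mV Bs b * x + Hf a * y" unfolding ideal_gen_two by blast
  then show ?thesis by (metis add.commute)
qed

end

lemma mm_in: "s \<in> S \<Longrightarrow> x * mm As Bs lo s \<in> ideal_gen (mm As Bs lo ` S)"
  by (simp add: ideal_gen_base ideal_gen_simps)

lemma thmT:
  assumes dA: "dist_list As" and dB: "dist_list Bs"
  shows "finite S \<Longrightarrow> S \<noteq> {} \<Longrightarrow> (\<forall>s\<in>S. lo \<le> fst s \<and> fst s \<le> length As \<and> snd s \<le> length Bs) \<Longrightarrow>
    (\<forall>i. lo \<le> i \<longrightarrow> i < Min (fst ` S) \<longrightarrow> f \<in> ideal_gen {Hf (As!i)}) \<Longrightarrow>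
    (\<forall>j. j < Min (snd ` S) \<longrightarrow> f \<in> ideal_gen {Vf (Bs!j)}) \<Longrightarrow>
    (\<forall>i j. lo \<le> i \<longrightarrow> i < length As \<longrightarrow> j < length Bs \<longrightarrow> (\<forall>s\<in>S. i < fst s \<or> j < snd s) \<longrightarrow>
        f \<in> I_pt (As!i, Bs!j)) \<Longrightarrow>
    f \<in> ideal_gen (mm As Bs lo ` S)"
proof (induction "Max (fst ` S) - lo" arbitrary: lo S f rule: less_induct)
  case less
  note fin = less.prems(1) and ne = less.prems(2) and bnd = less.prems(3)
    and c1 = less.prems(4) and c2 = less.prems(5) and c3 = less.prems(6)
  define amax where "amax = Max (fst ` S)"
  define amin where "amin = Min (fst ` S)"
  define bmin where "bmin = Min (snd ` S)"
  have amax_in: "amax \<in> fst ` S" using fin ne by (simp add: amax_def)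
  have amin_in: "amin \<in> fst ` S" using fin ne by (simp add: amin_def)
  have bmin_in: "bmin \<in> snd ` S" using fin ne by (simp add: bmin_def)
  have le_amax: "\<forall>s\<in>S. fst s \<le> amax" using fin by (simp add: amax_def)
  have amin_le: "\<forall>s\<in>S. amin \<le> fst s" using fin by (simp add: amin_def)
  have bmin_le: "\<forall>s\<in>S. bmin \<le> snd s" using fin by (simp add: bmin_def)
  have lo_amin: "lo \<le> amin" using amin_in bnd by auto
  have amin_amax: "amin \<le> amax" using amin_in le_amax by auto
  have amax_len: "amax \<le> length As" using amax_in bnd by auto
  have bmin_len: "bmin \<le> length Bs" using bmin_in bnd by auto
  consider (A) "amax = lo" | (B) "lo < amax" "lo < amin" | (C) "lo < amax" "amin = lo"
    using lo_amin amin_amax by linarith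
  then show ?case
  proof cases
    case A
    have all: "fst s = lo" if "s \<in> S" for s
      using le_amax bnd that A by fastforce
    obtain s0 where s0: "s0 \<in> S" "snd s0 = bmin" using bmin_in by auto
    have "f \<in> ideal_gen {mV Bs bmin}"
      by (rule prodV[OF dA dB bmin_len]) (use c2 bmin_def in auto)
    then obtain x where x: "f = mV Bs bmin * x" by (auto simp: ideal_gen_single)
    have "mm As Bs lo s0 = mV Bs bmin" using all[OF s0(1)] s0(2) by (simp add: mm_def mH_empty)
    then have "f = x * mm As Bs lo s0" using x by (simp add: mult.commute)
    then show ?thesis using mm_in[OF s0(1)] by simp
  next
    case B
    let ?H = "Hf (As!lo)"
    have lo_len: "lo < length As" using B amax_len by simp
    have "f \<in> ideal_gen {?H}" using c1 B amin_def by auto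
    then obtain f' where f': "f = ?H * f'" by (auto simp: ideal_gen_single)
    have "f' \<in> ideal_gen (mm As Bs (Suc lo) ` S)"
    proof (rule less.hyps)
      show "Max (fst ` S) - Suc lo < Max (fst ` S) - lo" using B amax_def by simp
      show "finite S" "S \<noteq> {}" by (fact fin, fact ne)
      show "\<forall>s\<in>S. Suc lo \<le> fst s \<and> fst s \<le> length As \<and> snd s \<le> length Bs"
        using bnd amin_le B by force
      show "\<forall>i. Suc lo \<le> i \<longrightarrow> i < Min (fst ` S) \<longrightarrow> f' \<in> ideal_gen {Hf (As!i)}"
      proof (intro allI impI)
        fix i assume i: "Suc lo \<le> i" "i < Min (fst ` S)"
        have il: "i < length As" using i amin_def amin_amax amax_len by simp
        have "?H * f' \<in> ideal_gen {Hf (As!i)}" using c1 i f' by auto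
        then show "f' \<in> ideal_gen {Hf (As!i)}"
          using prime_cancel[OF pH[OF dA dB il] HnH[OF dA dB il lo_len]] i by auto
      qed
      show "\<forall>j. j < Min (snd ` S) \<longrightarrow> f' \<in> ideal_gen {Vf (Bs!j)}"
      proof (intro allI impI)
        fix j assume j: "j < Min (snd ` S)"
        have jl: "j < length Bs" using j bmin_def bmin_len by simp
        have "?H * f' \<in> ideal_gen {Vf (Bs!j)}" using c2 j f' by auto
        then show "f' \<in> ideal_gen {Vf (Bs!j)}"
          using prime_cancel[OF pV[OF dA dB jl] HnV[OF dA dB lo_len]] by auto
      qed
      show "\<forall>i j. Suc lo \<le> i \<longrightarrow> i < length As \<longrightarrow> j < length Bs \<longrightarrow> (\<forall>s\<in>S. i < fst s \<or> j < snd s) \<longrightarrow>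
          f' \<in> I_pt (As!i, Bs!j)"
      proof (intro allI impI)
        fix i j assume ij: "Suc lo \<le> i" "i < length As" "j < length Bs" "\<forall>s\<in>S. i < fst s \<or> j < snd s"
        have "?H * f' \<in> I_pt (As!i, Bs!j)" using c3 ij f' by auto
        then show "f' \<in> I_pt (As!i, Bs!j)"
          using prime_cancel[OF pPt[OF dA dB ij(2,3)] HnPt[OF dA dB ij(2) lo_len]] ij(1) by auto
      qed
    qed
    then have "?H * f' \<in> ideal_gen ((\<lambda>s. ?H * mm As Bs (Suc lo) s) ` S)" by (rule ideal_gen_mult_image)
    moreover have "(\<lambda>s. ?H * mm As Bs (Suc lo) s) ` S = mm As Bs lo ` S"
    proof (rule image_cong[OF refl])
      fix s assume "s \<in> S"
      then have "lo < fst s" using amin_le B by force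
      then show "?H * mm As Bs (Suc lo) s = mm As Bs lo s" by (simp add: mm_def mH_split)
    qed
    ultimately show ?thesis using f' by simp
  next
    case C
    let ?H = "Hf (As!lo)"
    have lo_len: "lo < length As" using C amax_len by simp
    define S0 where "S0 = {s\<in>S. fst s = lo}"
    define b0 where "b0 = Min (snd ` S0)"
    have finS0: "finite S0" using fin by (simp add: S0_def)
    have ne0: "S0 \<noteq> {}" using amin_in C by (auto simp: S0_def)
    have "b0 \<in> snd ` S0" using finS0 ne0 by (simp add: b0_def)
    then obtain s0 where s0: "s0 \<in> S" "fst s0 = lo" "snd s0 = b0" by (auto simp: S0_def)
    have b0_le: "b0 \<le> snd s" if "s \<in> S" "fst s = lo" for s
      using finS0 that by (auto simp: b0_def S0_def)
    have b0_len: "b0 \<le> length Bs" using s0 bnd by auto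
    have row: "f \<in> I_pt (As!lo, Bs!j)" if j: "j < b0" for j
    proof -
      have "\<forall>s\<in>S. lo < fst s \<or> j < snd s"
      proof
        fix s assume s: "s \<in> S"
        show "lo < fst s \<or> j < snd s"
        proof (cases "fst s = lo")
          case True then show ?thesis using b0_le[OF s] j by simp
        next
          case False then show ?thesis using bnd s by force
        qed
      qed
      then show ?thesis using c3 lo_len j b0_len by auto
    qed
    obtain q r where qr: "f = ?H * q + mV Bs b0 * r"
      using line_HV[OF dA dB b0_len dl_valid[OF dA lo_len] row] by blast
    define S' where "S' = {s\<in>S. lo < fst s} \<union> {(Suc lo, b0)}"
    have finS': "finite S'" using fin by (simp add: S'_def)
    have neS': "S' \<noteq> {}" by (simp add: S'_def)
    have sl: "(Suc lo, b0) \<in> S'" by (simp add: S'_def)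
    have maxS': "Max (fst ` S') = amax"
    proof (rule Max_eqI)
      show "finite (fst ` S')" using finS' by simp
      show "y \<le> amax" if "y \<in> fst ` S'" for y
        using that le_amax C by (auto simp: S'_def)
      show "amax \<in> fst ` S'" using amax_in C by (force simp: S'_def)
    qed
    have minS': "Min (fst ` S') \<le> Suc lo"
      using finS' sl by (metis Min_le finite_imageI fst_conv image_eqI)
    have bminS'_b0: "Min (snd ` S') \<le> b0"
      using finS' sl by (metis Min_le finite_imageI snd_conv image_eqI)
    have bminS': "Min (snd ` S') \<le> bmin"
    proof -
      obtain s where s: "s \<in> S" "snd s = bmin" using bmin_in by auto
      show ?thesis
      proof (cases "lo < fst s")
        case True
        then have "s \<in> S'" using s by (simp add: S'_def)
        then show ?thesis using finS' s by (metis Min_le finite_imageI image_eqI)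
      next
        case False
        then have "fst s = lo" using bnd s by force
        then show ?thesis using b0_le[OF s(1)] s bminS'_b0 by simp
      qed
    qed
    have "q \<in> ideal_gen (mm As Bs (Suc lo) ` S')"
    proof (rule less.hyps)
      show "Max (fst ` S') - Suc lo < Max (fst ` S) - lo" using maxS' C amax_def by simp
      show "finite S'" "S' \<noteq> {}" by (fact finS', fact neS')
      show "\<forall>s\<in>S'. Suc lo \<le> fst s \<and> fst s \<le> length As \<and> snd s \<le> length Bs"
        using bnd C amax_len b0_len by (auto simp: S'_def)
      show "\<forall>i. Suc lo \<le> i \<longrightarrow> i < Min (fst ` S') \<longrightarrow> q \<in> ideal_gen {Hf (As!i)}"
        using minS' by auto
      show "\<forall>j. j < Min (snd ` S') \<longrightarrow> q \<in> ideal_gen {Vf (Bs!j)}"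
      proof (intro allI impI)
        fix j assume j: "j < Min (snd ` S')"
        have jb: "j < b0" "j < bmin" using j bminS' bminS'_b0 by auto
        have jl: "j < length Bs" using jb b0_len by simp
        have "f \<in> ideal_gen {Vf (Bs!j)}" using c2 jb bmin_def by auto
        moreover have "mV Bs b0 * r \<in> ideal_gen {Vf (Bs!j)}"
          using mV_in_V[OF jb(1)] by (simp add: ideal_gen_simps)
        ultimately have "?H * q \<in> ideal_gen {Vf (Bs!j)}"
          using qr ideal_gen_simps(5)[of f "{Vf (Bs!j)}" "mV Bs b0 * r"] by simp
        then show "q \<in> ideal_gen {Vf (Bs!j)}"
          using prime_cancel[OF pV[OF dA dB jl] HnV[OF dA dB lo_len]] by auto
      qed
      show "\<forall>i j. Suc lo \<le> i \<longrightarrow> i < length As \<longrightarrow> j < length Bs \<longrightarrow> (\<forall>s\<in>S'. i < fst s \<or> j < snd s) \<longrightarrow>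
          q \<in> I_pt (As!i, Bs!j)"
      proof (intro allI impI)
        fix i j assume ij: "Suc lo \<le> i" "i < length As" "j < length Bs" "\<forall>s\<in>S'. i < fst s \<or> j < snd s"
        have jb0: "j < b0" using ij(1,4) sl by force
        have "\<forall>s\<in>S. i < fst s \<or> j < snd s"
        proof
          fix s assume s: "s \<in> S"
          show "i < fst s \<or> j < snd s"
          proof (cases "lo < fst s")
            case True then have "s \<in> S'" using s by (simp add: S'_def)
            then show ?thesis using ij(4) by blast
          next
            case False then have "fst s = lo" using bnd s by force
            then show ?thesis using b0_le[OF s] jb0 by simp
          qed
        qed
        then have "f \<in> I_pt (As!i, Bs!j)" using c3 ij by auto
        moreover have "mV Bs b0 * r \<in> I_pt (As!i, Bs!j)"
        proof -
          have "mV Bs b0 \<in> ideal_gen {Hf (As!i), Vf (Bs!j)}"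
            by (rule ideal_gen_single_sub[OF mV_in_V[OF jb0]]) (simp add: ideal_gen_base)
          then show ?thesis by (simp add: I_pt_simp ideal_gen_simps)
        qed
        ultimately have "?H * q \<in> I_pt (As!i, Bs!j)"
          using qr ideal_gen_simps(5)[of f _ "mV Bs b0 * r"] unfolding I_pt_def by simp
        then show "q \<in> I_pt (As!i, Bs!j)"
          using prime_cancel[OF pPt[OF dA dB ij(2,3)] HnPt[OF dA dB ij(2) lo_len]] ij(1) by auto
      qed
    qed
    then have Hq: "?H * q \<in> ideal_gen ((\<lambda>s. ?H * mm As Bs (Suc lo) s) ` S')" by (rule ideal_gen_mult_image)
    have ms0: "mm As Bs lo s0 = mV Bs b0" using s0 by (simp add: mm_def mH_empty)
    have sub: "ideal_gen ((\<lambda>s. ?H * mm As Bs (Suc lo) s) ` S') \<subseteq> ideal_gen (mm As Bs lo ` S)"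
    proof (rule ideal_gen_subsetI)
      fix x assume "x \<in> (\<lambda>s. ?H * mm As Bs (Suc lo) s) ` S'"
      then obtain s where s: "s \<in> S'" "x = ?H * mm As Bs (Suc lo) s" by blast
      show "x \<in> ideal_gen (mm As Bs lo ` S)"
      proof (cases "s \<in> S \<and> lo < fst s")
        case True
        then have "x = mm As Bs lo s" using s by (simp add: mm_def mH_split)
        then show ?thesis using True by (simp add: ideal_gen_base)
      next
        case False
        then have "s = (Suc lo, b0)" using s by (auto simp: S'_def)
        then have "x = ?H * mm As Bs lo s0" using s ms0 by (simp add: mm_def mH_empty)
        then show ?thesis using mm_in[OF s0(1)] by simp
      qed
    qed
    have "mV Bs b0 * r \<in> ideal_gen (mm As Bs lo ` S)"
      using mm_in[OF s0(1), where x=r and As=As and Bs=Bs and lo=lo] ms0 by (simp add: mult.commute)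
    then show ?thesis using qr Hq sub by (auto simp: ideal_gen_simps)
  qed
qed

lemma is_ideal_sum: "is_ideal I \<Longrightarrow> is_ideal J \<Longrightarrow> is_ideal {x + y | x y. x \<in> I \<and> y \<in> J}"
proof (rule is_idealI)
  assume I: "is_ideal I" and J: "is_ideal J"
  show "0 \<in> {x + y | x y. x \<in> I \<and> y \<in> J}" using I J by (auto intro!: exI[of _ 0] simp: ideal_0)
  fix u w assume "u \<in> {x + y | x y. x \<in> I \<and> y \<in> J}" "w \<in> {x + y | x y. x \<in> I \<and> y \<in> J}"
  then obtain x1 y1 x2 y2 where "u = x1 + y1" "x1 \<in> I" "y1 \<in> J" "w = x2 + y2" "x2 \<in> I" "y2 \<in> J" by blast
  then show "u + w \<in> {x + y | x y. x \<in> I \<and> y \<in> J}"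
    using I J by (intro CollectI exI[of _ "x1 + x2"] exI[of _ "y1 + y2"]) (simp add: ideal_add algebra_simps)
next
  fix r u assume I: "is_ideal I" and J: "is_ideal J" and "u \<in> {x + y | x y. x \<in> I \<and> y \<in> J}"
  then obtain x1 y1 where "u = x1 + y1" "x1 \<in> I" "y1 \<in> J" by blast
  then show "r * u \<in> {x + y | x y. x \<in> I \<and> y \<in> J}"
    using I J by (intro CollectI exI[of _ "r * x1"] exI[of _ "r * y1"]) (simp add: ideal_mult algebra_simps)
qed

lemma is_ideal_mult: "is_ideal K \<Longrightarrow> is_ideal {h * k | k. k \<in> K}"
proof (rule is_idealI)
  assume K: "is_ideal K"
  show "0 \<in> {h * k | k. k \<in> K}" using K by (auto intro!: exI[of _ 0] simp: ideal_0)
  fix u w assume "u \<in> {h * k | k. k \<in> K}" "w \<in> {h * k | k. k \<in> K}"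
  then obtain k1 k2 where "u = h * k1" "k1 \<in> K" "w = h * k2" "k2 \<in> K" by blast
  then show "u + w \<in> {h * k | k. k \<in> K}"
    using K by (intro CollectI exI[of _ "k1 + k2"]) (simp add: ideal_add algebra_simps)
next
  fix r u assume K: "is_ideal K" and "u \<in> {h * k | k. k \<in> K}"
  then obtain k1 where "u = h * k1" "k1 \<in> K" by blast
  then show "r * u \<in> {h * k | k. k \<in> K}"
    using K by (intro CollectI exI[of _ "r * k1"]) (simp add: ideal_mult mult.left_commute)
qed

lemma is_ideal_preimage_mult: "is_ideal J \<Longrightarrow> is_ideal {x. h * x \<in> J}"
  by (rule is_idealI) (simp_all add: ideal_0 ideal_add ideal_mult distrib_left mult.left_commute[of h])

context
  fixes As Bs :: "p1 list" and c d :: p1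
  assumes dA: "dist_list As" and dB: "dist_list Bs"
    and vc: "valid_p1 c" and vd: "valid_p1 d"
    and cA: "\<And>i. i < length As \<Longrightarrow> \<not> proj_eq c (As!i)"
    and dBs: "\<And>j. j < length Bs \<Longrightarrow> \<not> proj_eq (Bs!j) d"
begin

lemma Q3:
  assumes "b \<le> length Bs" "Vf d * x \<in> ideal_gen {Hf c, mV Bs b}"
  shows "x \<in> ideal_gen {Hf c, mV Bs b}"
proof -
  have "\<exists>q r. x = Hf c * q + mV Bs b * r"
  proof (rule line_HV[OF dA dB assms(1) vc])
    fix j assume j: "j < b"
    then have jl: "j < length Bs" using assms(1) by simp
    have "mV Bs b \<in> ideal_gen {Hf c, Vf (Bs!j)}"
      by (rule ideal_gen_single_sub[OF mV_in_V[OF j]]) (simp add: ideal_gen_base)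
    then have "ideal_gen {Hf c, mV Bs b} \<subseteq> ideal_gen {Hf c, Vf (Bs!j)}"
      by (intro ideal_gen_subsetI) (auto simp: ideal_gen_base)
    then have "Vf d * x \<in> ideal_gen {Hf c, Vf (Bs!j)}" using assms(2) by blast
    then show "x \<in> I_pt (c, Bs!j)" unfolding I_pt_simp
      using prime_cancel[OF prime_HV[OF vc dl_valid[OF dB jl]] nV_HV[OF dBs[OF jl]]] by blast
  qed
  then show ?thesis by (auto simp: ideal_gen_two)
qed

lemma Q2:
  assumes "b \<le> length Bs" "lo < length As" "Hf (As!lo) * x \<in> ideal_gen {Hf c, mV Bs b}"
  shows "x \<in> ideal_gen {Hf c, mV Bs b}"
proof -
  have "\<exists>q r. x = Hf c * q + mV Bs b * r"
  proof (rule line_HV[OF dA dB assms(1) vc])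
    fix j assume j: "j < b"
    then have jl: "j < length Bs" using assms(1) by simp
    have "mV Bs b \<in> ideal_gen {Hf c, Vf (Bs!j)}"
      by (rule ideal_gen_single_sub[OF mV_in_V[OF j]]) (simp add: ideal_gen_base)
    then have "ideal_gen {Hf c, mV Bs b} \<subseteq> ideal_gen {Hf c, Vf (Bs!j)}"
      by (intro ideal_gen_subsetI) (auto simp: ideal_gen_base)
    then have "Hf (As!lo) * x \<in> ideal_gen {Hf c, Vf (Bs!j)}" using assms(3) by blast
    then show "x \<in> I_pt (c, Bs!j)" unfolding I_pt_simp
      using prime_cancel[OF prime_HV[OF vc dl_valid[OF dB jl]] nH_HV[OF cA[OF assms(2)]]] by blast
  qed
  then show ?thesis by (auto simp: ideal_gen_two)
qed

lemma Q1:
  assumes "b \<le> length Bs" "lo < length As" "Vf d * x \<in> ideal_gen (insert (mV Bs b) {Hf c, Hf (As!lo)})"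
  shows "x \<in> ideal_gen (insert (mV Bs b) {Hf c, Hf (As!lo)})"
proof (rule line_gen[OF dA dB assms(1)])
  let ?E = "{Hf c, Hf (As!lo)}"
  fix j assume j: "j < b"
  then have jl: "j < length Bs" using assms(1) by simp
  have e: "insert (Vf (Bs!j)) ?E = {Hf c, Hf (As!lo), Vf (Bs!j)}" by auto
  have P: "prime_ideal (ideal_gen {Hf c, Hf (As!lo), Vf (Bs!j)})"
    by (rule prime_HHV[OF vc dl_valid[OF dA assms(2)] dl_valid[OF dB jl] cA[OF assms(2)]])
  then show "prime_ideal (ideal_gen (insert (Vf (Bs!j)) ?E))" unfolding e .
  show "1 \<notin> ideal_gen (insert (Vf (Bs!j)) ?E)" by (rule one_notin) auto
  have "mV Bs b \<in> ideal_gen (insert (Vf (Bs!j)) ?E)"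
    by (rule ideal_gen_single_sub[OF mV_in_V[OF j]]) (simp add: ideal_gen_base)
  then have "ideal_gen (insert (mV Bs b) ?E) \<subseteq> ideal_gen (insert (Vf (Bs!j)) ?E)"
    by (intro ideal_gen_subsetI) (auto simp: ideal_gen_base)
  then have "Vf d * x \<in> ideal_gen {Hf c, Hf (As!lo), Vf (Bs!j)}" using assms(3) e by auto
  then show "x \<in> ideal_gen (insert (Vf (Bs!j)) ?E)" unfolding e
    using prime_cancel[OF P nV_HHV[OF dBs[OF jl]]] by blast
  fix k assume "k < b" "k \<noteq> j"
  then show "Vf (Bs!k) \<notin> ideal_gen (insert (Vf (Bs!j)) ?E)" unfolding e
    using nV_HHV dl_np[OF dB] jl assms(1) by simp
qed

lemma Q4:
  assumes "lo < length As" "Vf d * x \<in> ideal_gen {Hf c, Hf (As!lo)}"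
  shows "x \<in> ideal_gen {Hf c, Hf (As!lo)}"
  using prime_cancel[OF prime_HH[OF vc dl_valid[OF dA assms(1)] cA[OF assms(1)]] nV_HH[OF vd]] assms(2)
  by blast

end

lemma dvd_in: "a dvd x \<Longrightarrow> a \<in> ideal_gen S \<Longrightarrow> x \<in> ideal_gen S"
  unfolding dvd_def using ideal_gen_simps(4) by blast

lemma sumI: "x \<in> I \<Longrightarrow> k \<in> K \<Longrightarrow> z = x + h * k \<Longrightarrow> z \<in> {x + y | x y. x \<in> I \<and> y \<in> {h * k | k. k \<in> K}}"
  by blast

lemma thmN:
  assumes dA: "dist_list As" and dB: "dist_list Bs"
    and vc: "valid_p1 c" and vd: "valid_p1 d"
    and cA: "\<And>i. i < length As \<Longrightarrow> \<not> proj_eq c (As!i)"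
    and dBs: "\<And>j. j < length Bs \<Longrightarrow> \<not> proj_eq (Bs!j) d"
  shows "finite S \<Longrightarrow> S \<noteq> {} \<Longrightarrow> (\<forall>s\<in>S. lo \<le> fst s \<and> fst s \<le> length As \<and> snd s \<le> length Bs) \<Longrightarrow>
    Vf d * q \<in> ideal_gen (insert (Hf c) (mm As Bs lo ` S)) \<Longrightarrow>
    q \<in> ideal_gen (insert (Hf c) (mm As Bs lo ` S))"
proof (induction "Max (fst ` S) - lo" arbitrary: lo S q rule: less_induct)
  case less
  note fin = less.prems(1) and ne = less.prems(2) and bnd = less.prems(3) and hq = less.prems(4)
  define J where "J = ideal_gen (insert (Hf c) (mm As Bs lo ` S))"
  have cJ: "Hf c \<in> J" by (simp add: J_def ideal_gen_base)
  have genJ: "mm As Bs lo s \<in> J" if "s \<in> S" for s using that by (simp add: J_def ideal_gen_base)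
  have hqJ: "Vf d * q \<in> J" using hq by (simp add: J_def)
  have isJ: "is_ideal J" by (simp add: J_def ideal_gen_is_ideal)
  define amax where "amax = Max (fst ` S)"
  define amin where "amin = Min (fst ` S)"
  define bmin where "bmin = Min (snd ` S)"
  have amax_in: "amax \<in> fst ` S" using fin ne by (simp add: amax_def)
  have amin_in: "amin \<in> fst ` S" using fin ne by (simp add: amin_def)
  have bmin_in: "bmin \<in> snd ` S" using fin ne by (simp add: bmin_def)
  have le_amax: "\<forall>s\<in>S. fst s \<le> amax" using fin by (simp add: amax_def)
  have amin_le: "\<forall>s\<in>S. amin \<le> fst s" using fin by (simp add: amin_def)
  have bmin_le: "\<forall>s\<in>S. bmin \<le> snd s" using fin by (simp add: bmin_def)
  have lo_amin: "lo \<le> amin" using amin_in bnd by auto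
  have amin_amax: "amin \<le> amax" using amin_in le_amax by auto
  have amax_len: "amax \<le> length As" using amax_in bnd by auto
  have bmin_len: "bmin \<le> length Bs" using bmin_in bnd by auto
  consider (A) "amax = lo" | (B) "lo < amax" "lo < amin" | (C) "lo < amax" "amin = lo"
    using lo_amin amin_amax by linarith
  then show ?case
  proof cases
    case A
    have all: "fst s = lo" if "s \<in> S" for s
      using le_amax bnd that A by fastforce
    obtain s0 where s0: "s0 \<in> S" "snd s0 = bmin" using bmin_in by auto
    have ms0: "mm As Bs lo s0 = mV Bs bmin" using all[OF s0(1)] s0(2) by (simp add: mm_def mH_empty)
    have sub1: "J \<subseteq> ideal_gen {Hf c, mV Bs bmin}" unfolding J_def
    proof (rule ideal_gen_subsetI)
      fix x assume "x \<in> insert (Hf c) (mm As Bs lo ` S)"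
      then consider "x = Hf c" | s where "s \<in> S" "x = mm As Bs lo s" by blast
      then show "x \<in> ideal_gen {Hf c, mV Bs bmin}"
      proof cases
        case 1 then show ?thesis by (simp add: ideal_gen_base)
      next
        case 2
        then have "x = mV Bs (snd s)" using all by (simp add: mm_def mH_empty)
        moreover have "mV Bs bmin dvd mV Bs (snd s)" using mV_dvd[of bmin "snd s" Bs] bmin_le 2 by auto
        ultimately show ?thesis
          by (intro dvd_in[of "mV Bs bmin", OF _ ideal_gen_base]) auto
      qed
    qed
    have sub2: "ideal_gen {Hf c, mV Bs bmin} \<subseteq> J"
      unfolding J_def by (rule ideal_gen_subsetI) (use cJ genJ[OF s0(1)] ms0 in \<open>auto simp: J_def\<close>)
    have "q \<in> ideal_gen {Hf c, mV Bs bmin}"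
      using Q3[OF dA dB vc vd cA dBs bmin_len] hqJ sub1 by blast
    then show ?thesis using sub2 by (auto simp: J_def)
  next
    case B
    let ?H = "Hf (As!lo)"
    have lo_len: "lo < length As" using B amax_len by simp
    have gt: "lo < fst s" if "s \<in> S" for s using amin_le B that by force
    have msplit: "mm As Bs lo s = ?H * mm As Bs (Suc lo) s" if "s \<in> S" for s
      using gt[OF that] by (simp add: mm_def mH_split)
    have sub: "J \<subseteq> ideal_gen {Hf c, ?H}" unfolding J_def
    proof (rule ideal_gen_subsetI)
      fix x assume "x \<in> insert (Hf c) (mm As Bs lo ` S)"
      then consider "x = Hf c" | s where "s \<in> S" "x = mm As Bs lo s" by blast
      then show "x \<in> ideal_gen {Hf c, ?H}"
      proof cases
        case 1 then show ?thesis by (simp add: ideal_gen_base)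
      next
        case 2
        have "?H \<in> ideal_gen {Hf c, ?H}" by (simp add: ideal_gen_base)
        from ideal_mult2[OF ideal_gen_is_ideal this, of "mm As Bs (Suc lo) s"]
        show ?thesis using 2 msplit by simp
      qed
    qed
    have "q \<in> ideal_gen {Hf c, ?H}" using Q4[OF dA dB vc vd cA dBs lo_len] hqJ sub by blast
    then obtain u w where quw: "q = Hf c * u + ?H * w" by (auto simp: ideal_gen_two)
    define K where "K = ideal_gen (mm As Bs (Suc lo) ` S)"
    have dec: "J \<subseteq> {x + y | x y. x \<in> ideal_gen {Hf c} \<and> y \<in> {?H * k | k. k \<in> K}}" unfolding J_def
    proof (rule ideal_gen_least)
      show "is_ideal {x + y | x y. x \<in> ideal_gen {Hf c} \<and> y \<in> {?H * k | k. k \<in> K}}"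
        by (intro is_ideal_sum is_ideal_mult ideal_gen_is_ideal) (simp add: K_def ideal_gen_is_ideal)
      show "insert (Hf c) (mm As Bs lo ` S) \<subseteq> {x + y | x y. x \<in> ideal_gen {Hf c} \<and> y \<in> {?H * k | k. k \<in> K}}"
      proof
        fix x assume "x \<in> insert (Hf c) (mm As Bs lo ` S)"
        then consider "x = Hf c" | s where "s \<in> S" "x = mm As Bs lo s" by blast
        then show "x \<in> {x + y | x y. x \<in> ideal_gen {Hf c} \<and> y \<in> {?H * k | k. k \<in> K}}"
        proof cases
          case 1 then show ?thesis
            by (intro sumI[of "Hf c" _ 0]) (simp_all add: ideal_gen_base K_def ideal_0[OF ideal_gen_is_ideal])
        next
          case 2 then show ?thesis using msplit
            by (intro sumI[of 0 _ "mm As Bs (Suc lo) s"]) (simp_all add: ideal_gen_base K_def ideal_0[OF ideal_gen_is_ideal])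
        qed
      qed
    qed
    have "Vf d * (?H * w) = Vf d * q - Vf d * Hf c * u" using quw by (simp add: algebra_simps)
    moreover have "Vf d * Hf c * u \<in> J"
      using ideal_mult[OF isJ cJ, of "Vf d * u"] by (simp add: mult_ac)
    ultimately have "Vf d * (?H * w) \<in> J" using hqJ ideal_diff[OF isJ] by metis
    then obtain x k where xk: "Vf d * (?H * w) = x + ?H * k" "x \<in> ideal_gen {Hf c}" "k \<in> K"
      using dec by blast
    have "?H * (Vf d * w - k) \<in> ideal_gen {Hf c}"
      using xk by (simp add: algebra_simps)
    then have vk: "Vf d * w - k \<in> ideal_gen {Hf c}"
      using prime_cancel[OF prime_H[OF vc] nH_H[OF cA[OF lo_len]]] by blast
    define J' where "J' = ideal_gen (insert (Hf c) (mm As Bs (Suc lo) ` S))"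
    have s1: "ideal_gen {Hf c} \<subseteq> J'" unfolding J'_def by (rule ideal_gen_mono) auto
    have s2: "K \<subseteq> J'" unfolding J'_def K_def by (rule ideal_gen_mono) auto
    have "Vf d * w - k \<in> J'" "k \<in> J'" using vk xk(3) s1 s2 by blast+
    then have "(Vf d * w - k) + k \<in> J'" unfolding J'_def by (rule ideal_gen_simps(2))
    then have vJ: "Vf d * w \<in> J'" by simp
    have wJ': "w \<in> J'"
      unfolding J'_def
    proof (rule less.hyps)
      show "Vf d * w \<in> ideal_gen (insert (Hf c) (mm As Bs (Suc lo) ` S))" using vJ by (simp add: J'_def)
      show "Max (fst ` S) - Suc lo < Max (fst ` S) - lo" using B amax_def by simp
      show "finite S" "S \<noteq> {}" by (fact fin, fact ne)
      show "\<forall>s\<in>S. Suc lo \<le> fst s \<and> fst s \<le> length As \<and> snd s \<le> length Bs"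
        using bnd gt by (auto simp: Suc_le_eq)
    qed
    have "J' \<subseteq> {x. ?H * x \<in> J}" unfolding J'_def
    proof (rule ideal_gen_least)
      show "is_ideal {x. ?H * x \<in> J}" by (simp add: J_def ideal_gen_is_ideal is_ideal_preimage_mult)
      show "insert (Hf c) (mm As Bs (Suc lo) ` S) \<subseteq> {x. ?H * x \<in> J}"
        using ideal_mult[OF isJ cJ] genJ msplit by auto
    qed
    then have "?H * w \<in> J" using wJ' by blast
    then show ?thesis using quw ideal_add[OF isJ ideal_mult2[OF isJ cJ]] by (simp add: J_def)
  next
    case C
    let ?H = "Hf (As!lo)"
    have lo_len: "lo < length As" using C amax_len by simp
    define S0 where "S0 = {s\<in>S. fst s = lo}"
    define b0 where "b0 = Min (snd ` S0)"
    have finS0: "finite S0" using fin by (simp add: S0_def)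
    have ne0: "S0 \<noteq> {}" using amin_in C by (auto simp: S0_def)
    have "b0 \<in> snd ` S0" using finS0 ne0 by (simp add: b0_def)
    then obtain s0 where s0: "s0 \<in> S" "fst s0 = lo" "snd s0 = b0" by (auto simp: S0_def)
    have b0_le: "b0 \<le> snd s" if "s \<in> S" "fst s = lo" for s
      using finS0 that by (auto simp: b0_def S0_def)
    have b0_len: "b0 \<le> length Bs" using s0 bnd by auto
    have ms0: "mm As Bs lo s0 = mV Bs b0" using s0 by (simp add: mm_def mH_empty)
    have cases_s: "fst s = lo \<or> lo < fst s" if "s \<in> S" for s using bnd that by force
    have msplit: "mm As Bs lo s = ?H * mm As Bs (Suc lo) s" if "lo < fst s" for s
      using that by (simp add: mm_def mH_split)
    have mlo: "mV Bs b0 dvd mm As Bs lo s" if "s \<in> S" "fst s = lo" for s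
      using that b0_le mV_dvd[of b0 "snd s" Bs] by (simp add: mm_def mH_empty)
    define S' where "S' = {s\<in>S. lo < fst s} \<union> {(Suc lo, b0)}"
    have finS': "finite S'" using fin by (simp add: S'_def)
    have neS': "S' \<noteq> {}" by (simp add: S'_def)
    have sl: "(Suc lo, b0) \<in> S'" by (simp add: S'_def)
    have maxS': "Max (fst ` S') = amax"
    proof (rule Max_eqI)
      show "finite (fst ` S')" using finS' by simp
      show "y \<le> amax" if "y \<in> fst ` S'" for y
        using that le_amax C by (auto simp: S'_def)
      show "amax \<in> fst ` S'" using amax_in C by (force simp: S'_def)
    qed
    have sub: "J \<subseteq> ideal_gen (insert (mV Bs b0) {Hf c, ?H})" unfolding J_def
    proof (rule ideal_gen_subsetI)
      fix x assume "x \<in> insert (Hf c) (mm As Bs lo ` S)"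
      then consider "x = Hf c" | s where "s \<in> S" "x = mm As Bs lo s" by blast
      then show "x \<in> ideal_gen (insert (mV Bs b0) {Hf c, ?H})"
      proof cases
        case 1 then show ?thesis by (simp add: ideal_gen_base)
      next
        case 2
        then consider "fst s = lo" | "lo < fst s" using cases_s by blast
        then show ?thesis
        proof cases
          case 1 then have "mV Bs b0 dvd x" using 2 mlo by auto
          then show ?thesis by (intro dvd_in[of "mV Bs b0", OF _ ideal_gen_base]) auto
        next
          case 3: 2
          have "?H \<in> ideal_gen (insert (mV Bs b0) {Hf c, ?H})" by (simp add: ideal_gen_base)
          from ideal_mult2[OF ideal_gen_is_ideal this, of "mm As Bs (Suc lo) s"]
          show ?thesis using 2 3 msplit by simp
        qed
      qed
    qed
    have "q \<in> ideal_gen (insert (mV Bs b0) {Hf c, ?H})"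
      using Q1[OF dA dB vc vd cA dBs b0_len lo_len] hqJ sub by blast
    then obtain z u w where quw: "q = mV Bs b0 * z + Hf c * u + ?H * w" by (auto simp: ideal_gen_three)
    define K where "K = ideal_gen (mm As Bs (Suc lo) ` S')"
    have dec: "J \<subseteq> {x + y | x y. x \<in> ideal_gen {Hf c, mV Bs b0} \<and> y \<in> {?H * k | k. k \<in> K}}" unfolding J_def
    proof (rule ideal_gen_least)
      show "is_ideal {x + y | x y. x \<in> ideal_gen {Hf c, mV Bs b0} \<and> y \<in> {?H * k | k. k \<in> K}}"
        by (intro is_ideal_sum is_ideal_mult ideal_gen_is_ideal) (simp add: K_def ideal_gen_is_ideal)
      show "insert (Hf c) (mm As Bs lo ` S) \<subseteq> {x + y | x y. x \<in> ideal_gen {Hf c, mV Bs b0} \<and> y \<in> {?H * k | k. k \<in> K}}"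
      proof
        fix x assume "x \<in> insert (Hf c) (mm As Bs lo ` S)"
        then consider "x = Hf c" | s where "s \<in> S" "x = mm As Bs lo s" by blast
        then show "x \<in> {x + y | x y. x \<in> ideal_gen {Hf c, mV Bs b0} \<and> y \<in> {?H * k | k. k \<in> K}}"
        proof cases
          case 1 then show ?thesis
            by (intro sumI[of "Hf c" _ 0]) (simp_all add: ideal_gen_base K_def ideal_0[OF ideal_gen_is_ideal])
        next
          case 2
          then consider "fst s = lo" | "lo < fst s" using cases_s by blast
          then show ?thesis
          proof cases
            case 1
            have "mV Bs b0 dvd x" using 2 1 mlo by auto
            then have "x \<in> ideal_gen {Hf c, mV Bs b0}"
              by (intro dvd_in[of "mV Bs b0", OF _ ideal_gen_base]) auto
            then show ?thesis
              by (intro sumI[of x _ 0]) (simp_all add: K_def ideal_0[OF ideal_gen_is_ideal])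
          next
            case 3: 2
            then have "s \<in> S'" using 2 by (simp add: S'_def)
            then have "mm As Bs (Suc lo) s \<in> K" by (simp add: K_def ideal_gen_base)
            then show ?thesis using 2 3 msplit
              by (intro sumI[of 0 _ "mm As Bs (Suc lo) s"]) (simp_all add: ideal_0[OF ideal_gen_is_ideal])
          qed
        qed
      qed
    qed
    have "Vf d * (?H * w) = Vf d * q - Vf d * Hf c * u - Vf d * z * mV Bs b0" using quw by (simp add: algebra_simps)
    moreover have "Vf d * Hf c * u \<in> J"
      using ideal_mult[OF isJ cJ, of "Vf d * u"] by (simp add: mult_ac)
    moreover have "Vf d * z * mV Bs b0 \<in> J" using ideal_mult[OF isJ genJ[OF s0(1)], of "Vf d * z"] ms0 by simp
    ultimately have "Vf d * (?H * w) \<in> J" using hqJ ideal_diff[OF isJ] by metis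
    then obtain x k where xk: "Vf d * (?H * w) = x + ?H * k" "x \<in> ideal_gen {Hf c, mV Bs b0}" "k \<in> K"
      using dec by blast
    have "?H * (Vf d * w - k) \<in> ideal_gen {Hf c, mV Bs b0}"
      using xk by (simp add: algebra_simps)
    then have vk: "Vf d * w - k \<in> ideal_gen {Hf c, mV Bs b0}"
      using Q2[OF dA dB vc vd cA dBs b0_len lo_len] by blast
    define J' where "J' = ideal_gen (insert (Hf c) (mm As Bs (Suc lo) ` S'))"
    have "mm As Bs (Suc lo) (Suc lo, b0) = mV Bs b0" by (simp add: mm_def mH_empty)
    then have "mV Bs b0 \<in> J'" using sl unfolding J'_def
      by (intro ideal_gen_base) (metis image_eqI insertCI)
    then have s1: "ideal_gen {Hf c, mV Bs b0} \<subseteq> J'" unfolding J'_def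
      by (intro ideal_gen_subsetI) (auto simp: ideal_gen_base)
    have s2: "K \<subseteq> J'" unfolding J'_def K_def by (rule ideal_gen_mono) auto
    have "Vf d * w - k \<in> J'" "k \<in> J'" using vk xk(3) s1 s2 by blast+
    then have "(Vf d * w - k) + k \<in> J'" unfolding J'_def by (rule ideal_gen_simps(2))
    then have vJ: "Vf d * w \<in> J'" by simp
    have wJ': "w \<in> J'"
      unfolding J'_def
    proof (rule less.hyps)
      show "Vf d * w \<in> ideal_gen (insert (Hf c) (mm As Bs (Suc lo) ` S'))" using vJ by (simp add: J'_def)
      show "Max (fst ` S') - Suc lo < Max (fst ` S) - lo" using maxS' C amax_def by simp
      show "finite S'" "S' \<noteq> {}" by (fact finS', fact neS')
      show "\<forall>s\<in>S'. Suc lo \<le> fst s \<and> fst s \<le> length As \<and> snd s \<le> length Bs"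
        using bnd C amax_len b0_len by (auto simp: S'_def)
    qed
    have "J' \<subseteq> {x. ?H * x \<in> J}" unfolding J'_def
    proof (rule ideal_gen_least)
      show "is_ideal {x. ?H * x \<in> J}" by (simp add: J_def ideal_gen_is_ideal is_ideal_preimage_mult)
      show "insert (Hf c) (mm As Bs (Suc lo) ` S') \<subseteq> {x. ?H * x \<in> J}"
      proof
        fix x assume "x \<in> insert (Hf c) (mm As Bs (Suc lo) ` S')"
        then consider "x = Hf c" | s where "s \<in> S'" "x = mm As Bs (Suc lo) s" by blast
        then show "x \<in> {x. ?H * x \<in> J}"
        proof cases
          case 1 then show ?thesis using ideal_mult[OF isJ cJ] by simp
        next
          case 2
          show ?thesis
          proof (cases "s = (Suc lo, b0)")
            case True
            then have "?H * x = ?H * mm As Bs lo s0" using 2 ms0 by (simp add: mm_def mH_empty)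
            moreover have "?H * mm As Bs lo s0 \<in> J" using ideal_mult[OF isJ genJ[OF s0(1)]] by simp
            ultimately have "?H * x \<in> J" by metis
            then show ?thesis by simp
          next
            case False
            then have "s \<in> S" "lo < fst s" using 2 by (auto simp: S'_def)
            then have "?H * mm As Bs (Suc lo) s \<in> J" using msplit genJ by metis
            then show ?thesis using 2 by simp
          qed
        qed
      qed
    qed
    then have "?H * w \<in> J" using wJ' by blast
    moreover have "mV Bs b0 * z \<in> J" using ideal_mult2[OF isJ genJ[OF s0(1)]] ms0 by simp
    moreover have "Hf c * u \<in> J" using ideal_mult2[OF isJ cJ] by simp
    ultimately have "q \<in> J" using quw ideal_add[OF isJ] by metis
    then show ?thesis by (simp add: J_def)
  qed
qed

lemma prod_primes:
  assumes "finite F"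
    and "\<And>x. x \<in> F \<Longrightarrow> prime_ideal (ideal_gen {p x})"
    and "\<And>x. x \<in> F \<Longrightarrow> 1 \<notin> ideal_gen {p x}"
    and "\<And>x y. x \<in> F \<Longrightarrow> y \<in> F \<Longrightarrow> y \<noteq> x \<Longrightarrow> p y \<notin> ideal_gen {p x}"
    and "\<And>x. x \<in> F \<Longrightarrow> f \<in> ideal_gen {p x}"
  shows "f \<in> ideal_gen {prod p F}"
  using assms
proof (induction F rule: finite_induct)
  case empty then show ?case by (simp add: ideal_gen_one)
next
  case (insert x F)
  have "f \<in> ideal_gen {prod p F}" using insert.IH insert.prems by blast
  then obtain r where r: "f = prod p F * r" by (auto simp: ideal_gen_single)
  have "prod p F \<notin> ideal_gen {p x}"
    by (rule prime_prod_notin) (use insert in auto)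
  moreover have "prod p F * r \<in> ideal_gen {p x}" using insert.prems(4) r by auto
  ultimately have "r \<in> ideal_gen {p x}" using prime_cancel insert.prems(1) by blast
  then obtain r' where "r = p x * r'" by (auto simp: ideal_gen_single)
  then have "f = prod p (insert x F) * r'" using r insert.hyps by (simp add: mult_ac)
  then show ?case by (auto simp: ideal_gen_single)
qed

lemma prime_zero: "prime_ideal (ideal_gen {})"
  by (simp add: prime_ideal_def ideal_gen_empty)

lemma Lam_notin:
  assumes "valid_lp W" "prime_ideal I" "1 \<notin> I"
    and "\<And>a. a \<in> hls W \<Longrightarrow> Hf a \<notin> I" "\<And>b. b \<in> vls W \<Longrightarrow> Vf b \<notin> I"
  shows "Lambda W \<notin> I"
proof -
  have "(\<Prod>a\<in>hls W. Hf a) \<notin> I" by (rule prime_prod_notin) (use assms in auto)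
  moreover have "(\<Prod>b\<in>vls W. Vf b) \<notin> I" by (rule prime_prod_notin) (use assms in auto)
  ultimately show ?thesis using assms(2) unfolding Lambda_def prime_ideal_def by blast
qed

lemma Lam_nz: "valid_lp W \<Longrightarrow> Lambda W \<noteq> 0"
  using Lam_notin[of W "ideal_gen {}"] prime_zero
  by (auto simp: ideal_gen_empty valid_lp_def Hf_nz Vf_nz)

lemma Lam_div:
  assumes W: "valid_lp W"
    and H: "\<And>a. a \<in> hls W \<Longrightarrow> f \<in> ideal_gen {Hf a}"
    and V: "\<And>b. b \<in> vls W \<Longrightarrow> f \<in> ideal_gen {Vf b}"
  shows "\<exists>g. f = Lambda W * g"
proof -
  have fin: "finite (hls W)" "finite (vls W)" using W by (auto simp: valid_lp_def)
  have vh: "\<And>a. a \<in> hls W \<Longrightarrow> valid_p1 a" and vv: "\<And>b. b \<in> vls W \<Longrightarrow> valid_p1 b"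
    using W by (auto simp: valid_lp_def)
  have "f \<in> ideal_gen {prod Hf (hls W)}"
  proof (rule prod_primes[OF fin(1)])
    show "prime_ideal (ideal_gen {Hf x})" if "x \<in> hls W" for x using prime_H vh that by blast
    show "1 \<notin> ideal_gen {Hf x}" if "x \<in> hls W" for x by (rule one_notin) auto
    show "Hf y \<notin> ideal_gen {Hf x}" if "x \<in> hls W" "y \<in> hls W" "y \<noteq> x" for x y
      using that W nH_H unfolding valid_lp_def by metis
    show "f \<in> ideal_gen {Hf x}" if "x \<in> hls W" for x using H that by blast
  qed
  then obtain r where r: "f = prod Hf (hls W) * r" by (auto simp: ideal_gen_single)
  have "r \<in> ideal_gen {prod Vf (vls W)}"
  proof (rule prod_primes[OF fin(2)])
    show "prime_ideal (ideal_gen {Vf x})" if "x \<in> vls W" for x using prime_V vv that by blast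
    show "1 \<notin> ideal_gen {Vf x}" if "x \<in> vls W" for x by (rule one_notin) auto
    show "Vf y \<notin> ideal_gen {Vf x}" if "x \<in> vls W" "y \<in> vls W" "y \<noteq> x" for x y
      using that W nV_V unfolding valid_lp_def by metis
    show "r \<in> ideal_gen {Vf x}" if x: "x \<in> vls W" for x
    proof -
      have "prod Hf (hls W) \<notin> ideal_gen {Vf x}"
      proof (rule prime_prod_notin)
        show "prime_ideal (ideal_gen {Vf x})" using prime_V[OF vv[OF x]] .
        show "1 \<notin> ideal_gen {Vf x}" by (rule one_notin) auto
        show "Hf i \<notin> ideal_gen {Vf x}" if "i \<in> hls W" for i using nH_V[OF vh[OF that]] .
      qed
      moreover have "prod Hf (hls W) * r \<in> ideal_gen {Vf x}" using V x r by auto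
      ultimately show ?thesis using prime_cancel prime_V[OF vv[OF x]] by blast
    qed
  qed
  then obtain g where "r = prod Vf (vls W) * g" by (auto simp: ideal_gen_single)
  then have "f = Lambda W * g" using r by (simp add: Lambda_def mult_ac)
  then show ?thesis by blast
qed

lemma ideal_gen_Lam: "ideal_gen ((\<lambda>s. L * g s) ` T) = {L * k | k. k \<in> ideal_gen (g ` T)}"
proof
  show "ideal_gen ((\<lambda>s. L * g s) ` T) \<subseteq> {L * k | k. k \<in> ideal_gen (g ` T)}"
  proof (rule ideal_gen_least)
    show "is_ideal {L * k | k. k \<in> ideal_gen (g ` T)}" by (rule is_ideal_mult[OF ideal_gen_is_ideal])
    show "(\<lambda>s. L * g s) ` T \<subseteq> {L * k | k. k \<in> ideal_gen (g ` T)}" by (auto intro: ideal_gen_base)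
  qed
  show "{L * k | k. k \<in> ideal_gen (g ` T)} \<subseteq> ideal_gen ((\<lambda>s. L * g s) ` T)"
    using ideal_gen_mult_image by blast
qed

lemma Lam_inter:
  assumes "L \<noteq> (0::poly)"
  shows "{L * k | k. k \<in> M1} \<inter> {L * k | k. k \<in> M2} = {L * k | k. k \<in> M1 \<inter> M2}"
  using assms by auto

definition undom :: "(nat \<times> nat) set \<Rightarrow> nat \<Rightarrow> nat \<Rightarrow> bool" where
  "undom T i j \<longleftrightarrow> (\<forall>s\<in>T. i < fst s \<or> j < snd s)"

lemma ideal_gen_sub_by_gens: "(\<And>s. s \<in> T \<Longrightarrow> g s \<in> ideal_gen U) \<Longrightarrow> ideal_gen (g ` T) \<subseteq> ideal_gen U"
  by (rule ideal_gen_subsetI) auto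

lemma M_sub_H: "(\<And>s. s \<in> T \<Longrightarrow> i < fst s) \<Longrightarrow> ideal_gen (mm As Bs 0 ` T) \<subseteq> ideal_gen {Hf (As!i)}"
  by (rule ideal_gen_sub_by_gens) (auto simp: mm_def intro!: ideal_gen_simps(4) mH_in_H)

lemma M_sub_V: "(\<And>s. s \<in> T \<Longrightarrow> j < snd s) \<Longrightarrow> ideal_gen (mm As Bs lo ` T) \<subseteq> ideal_gen {Vf (Bs!j)}"
  by (rule ideal_gen_sub_by_gens) (auto simp: mm_def intro!: ideal_gen_simps(3) mV_in_V)

lemma H_pt_sub: "ideal_gen {Hf a} \<subseteq> I_pt (a, b)"
  by (simp add: I_pt_simp ideal_gen_mono)
lemma V_pt_sub: "ideal_gen {Vf b} \<subseteq> I_pt (a, b)"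
  by (simp add: I_pt_simp ideal_gen_mono)

lemma M_sub_pt: "undom T i j \<Longrightarrow> ideal_gen (mm As Bs 0 ` T) \<subseteq> I_pt (As!i, Bs!j)"
  unfolding I_pt_def
proof (rule ideal_gen_sub_by_gens)
  fix s assume u: "undom T i j" and s: "s \<in> T"
  then have "i < fst s \<or> j < snd s" by (auto simp: undom_def)
  then show "mm As Bs 0 s \<in> ideal_gen {Hf (fst (As!i, Bs!j)), Vf (snd (As!i, Bs!j))}"
  proof
    assume "i < fst s"
    then have "mH As 0 (fst s) \<in> ideal_gen {Hf (As!i), Vf (Bs!j)}"
      by (intro ideal_gen_single_sub[OF mH_in_H]) (auto simp: ideal_gen_base)
    then show ?thesis by (simp add: mm_def ideal_gen_simps(4))
  next
    assume "j < snd s"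
    then have "mV Bs (snd s) \<in> ideal_gen {Hf (As!i), Vf (Bs!j)}"
      by (intro ideal_gen_single_sub[OF mV_in_V]) (auto simp: ideal_gen_base)
    then show ?thesis by (simp add: mm_def ideal_gen_simps(3))
  qed
qed

locale core =
  fixes W :: lp and As Bs :: "p1 list" and SA SB :: "(nat \<times> nat) set"
  assumes W: "valid_lp W" and dA: "dist_list As" and dB: "dist_list Bs"
    and Acomp: "\<And>i. i < length As \<Longrightarrow> \<exists>P\<in>pts W. proj_eq (fst P) (As!i)"
    and Bcomp: "\<And>j. j < length Bs \<Longrightarrow> \<exists>P\<in>pts W. proj_eq (snd P) (Bs!j)"
    and finA: "finite SA" and neA: "SA \<noteq> {}" and finB: "finite SB" and neB: "SB \<noteq> {}"
    and bndA: "\<And>s. s \<in> SA \<Longrightarrow> fst s \<le> length As \<and> snd s \<le> length Bs"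
    and bndB: "\<And>s. s \<in> SB \<Longrightarrow> fst s \<le> length As \<and> snd s \<le> length Bs"
begin

definition "ap = max (Min (fst ` SA)) (Min (fst ` SB))"
definition "bp = max (Min (snd ` SA)) (Min (snd ` SB))"
definition "Pidx = {(i, j). ap \<le> i \<and> i < length As \<and> bp \<le> j \<and> j < length Bs \<and> (undom SA i j \<or> undom SB i j)}"
definition "Pts = (\<lambda>(i, j). (As!i, Bs!j)) ` Pidx"
definition "Hn = (\<lambda>i. As!i) ` {..<ap}"
definition "Vn = (\<lambda>j. Bs!j) ` {..<bp}"
definition "W' = (Pts, hls W \<union> Hn, vls W \<union> Vn)"
definition "MA = ideal_gen (mm As Bs 0 ` SA)"
definition "MB = ideal_gen (mm As Bs 0 ` SB)"
definition "Q = {g. (\<forall>i<ap. g \<in> ideal_gen {Hf (As!i)}) \<and> (\<forall>j<bp. g \<in> ideal_gen {Vf (Bs!j)}) \<and>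
                 (\<forall>i j. (i, j) \<in> Pidx \<longrightarrow> g \<in> I_pt (As!i, Bs!j))}"

lemma minA: "Min (fst ` SA) \<in> fst ` SA" "Min (snd ` SA) \<in> snd ` SA" using finA neA by simp_all
lemma minB: "Min (fst ` SB) \<in> fst ` SB" "Min (snd ` SB) \<in> snd ` SB" using finB neB by simp_all
lemma minA_le: "s \<in> SA \<Longrightarrow> Min (fst ` SA) \<le> fst s \<and> Min (snd ` SA) \<le> snd s" using finA by simp
lemma minB_le: "s \<in> SB \<Longrightarrow> Min (fst ` SB) \<le> fst s \<and> Min (snd ` SB) \<le> snd s" using finB by simp

lemma ap_le: "ap \<le> length As" using minA minB bndA bndB by (force simp: ap_def)
lemma bp_le: "bp \<le> length Bs" using minA minB bndA bndB by (force simp: bp_def)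

lemma vA: "i < length As \<Longrightarrow> valid_p1 (As!i)" using dl_valid[OF dA] .
lemma vB: "j < length Bs \<Longrightarrow> valid_p1 (Bs!j)" using dl_valid[OF dB] .

lemma np_H: assumes "i < length As" "a \<in> hls W" shows "\<not> proj_eq (As!i) a" "\<not> proj_eq a (As!i)"
proof -
  obtain P where P: "P \<in> pts W" "proj_eq (fst P) (As!i)" using Acomp[OF assms(1)] by blast
  have n: "\<not> proj_eq (fst P) a" using W P(1) assms(2) by (auto simp: valid_lp_def)
  show "\<not> proj_eq (As!i) a" using proj_eq_trans[OF P(2) _ vA[OF assms(1)]] n by blast
  then show "\<not> proj_eq a (As!i)" using proj_eq_sym by blast
qed

lemma np_V: assumes "j < length Bs" "b \<in> vls W" shows "\<not> proj_eq (Bs!j) b" "\<not> proj_eq b (Bs!j)"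
proof -
  obtain P where P: "P \<in> pts W" "proj_eq (snd P) (Bs!j)" using Bcomp[OF assms(1)] by blast
  have n: "\<not> proj_eq (snd P) b" using W P(1) assms(2) by (auto simp: valid_lp_def)
  show "\<not> proj_eq (Bs!j) b" using proj_eq_trans[OF P(2) _ vB[OF assms(1)]] n by blast
  then show "\<not> proj_eq b (Bs!j)" using proj_eq_sym by blast
qed

lemma MQ1: "MA \<inter> MB \<subseteq> Q"
proof
  fix g assume g: "g \<in> MA \<inter> MB"
  have H: "g \<in> ideal_gen {Hf (As!i)}" if "i < ap" for i
  proof -
    have "i < Min (fst ` SA) \<or> i < Min (fst ` SB)" using that by (auto simp: ap_def)
    then show ?thesis
    proof
      assume "i < Min (fst ` SA)"
      then have "MA \<subseteq> ideal_gen {Hf (As!i)}" unfolding MA_def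
        by (intro M_sub_H) (use minA_le in force)
      then show ?thesis using g by blast
    next
      assume "i < Min (fst ` SB)"
      then have "MB \<subseteq> ideal_gen {Hf (As!i)}" unfolding MB_def
        by (intro M_sub_H) (use minB_le in force)
      then show ?thesis using g by blast
    qed
  qed
  have V: "g \<in> ideal_gen {Vf (Bs!j)}" if "j < bp" for j
  proof -
    have "j < Min (snd ` SA) \<or> j < Min (snd ` SB)" using that by (auto simp: bp_def)
    then show ?thesis
    proof
      assume "j < Min (snd ` SA)"
      then have "MA \<subseteq> ideal_gen {Vf (Bs!j)}" unfolding MA_def
        by (intro M_sub_V) (use minA_le in force)
      then show ?thesis using g by blast
    next
      assume "j < Min (snd ` SB)"
      then have "MB \<subseteq> ideal_gen {Vf (Bs!j)}" unfolding MB_def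
        by (intro M_sub_V) (use minB_le in force)
      then show ?thesis using g by blast
    qed
  qed
  have P: "g \<in> I_pt (As!i, Bs!j)" if "(i, j) \<in> Pidx" for i j
  proof -
    have "undom SA i j \<or> undom SB i j" using that by (auto simp: Pidx_def)
    then show ?thesis
      using M_sub_pt[of SA i j As Bs] M_sub_pt[of SB i j As Bs] g by (auto simp: MA_def MB_def)
  qed
  show "g \<in> Q" using H V P by (auto simp: Q_def)
qed

lemma QM: assumes T: "T = SA \<or> T = SB" and g: "g \<in> Q" shows "g \<in> ideal_gen (mm As Bs 0 ` T)"
proof -
  have fin: "finite T" and ne: "T \<noteq> {}" using T finA finB neA neB by auto
  have bnd: "\<forall>s\<in>T. 0 \<le> fst s \<and> fst s \<le> length As \<and> snd s \<le> length Bs" using T bndA bndB by auto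
  have ma: "Min (fst ` T) \<le> ap" and mb: "Min (snd ` T) \<le> bp" using T by (auto simp: ap_def bp_def)
  have gH: "\<forall>i<ap. g \<in> ideal_gen {Hf (As!i)}" and gV: "\<forall>j<bp. g \<in> ideal_gen {Vf (Bs!j)}"
    and gP: "\<forall>i j. (i, j) \<in> Pidx \<longrightarrow> g \<in> I_pt (As!i, Bs!j)" using g by (auto simp: Q_def)
  show ?thesis
  proof (rule thmT[OF dA dB fin ne bnd])
    show "\<forall>i. 0 \<le> i \<longrightarrow> i < Min (fst ` T) \<longrightarrow> g \<in> ideal_gen {Hf (As!i)}" using gH ma by auto
    show "\<forall>j. j < Min (snd ` T) \<longrightarrow> g \<in> ideal_gen {Vf (Bs!j)}" using gV mb by auto
    show "\<forall>i j. 0 \<le> i \<longrightarrow> i < length As \<longrightarrow> j < length Bs \<longrightarrow> (\<forall>s\<in>T. i < fst s \<or> j < snd s) \<longrightarrow>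
        g \<in> I_pt (As!i, Bs!j)"
    proof (intro allI impI)
      fix i j assume ij: "0 \<le> i" "i < length As" "j < length Bs" "\<forall>s\<in>T. i < fst s \<or> j < snd s"
      show "g \<in> I_pt (As!i, Bs!j)"
      proof (cases "i < ap")
        case True then show ?thesis using gH H_pt_sub by blast
      next
        case False
        show ?thesis
        proof (cases "j < bp")
          case True then show ?thesis using gV V_pt_sub by blast
        next
          case False': False
          have "(i, j) \<in> Pidx" using False False' ij T by (auto simp: Pidx_def undom_def)
          then show ?thesis using gP by blast
        qed
      qed
    qed
  qed
qed

lemma MQ: "MA \<inter> MB = Q"
  using MQ1 QM[of SA] QM[of SB] by (auto simp: MA_def MB_def)

lemma Pts_iff: "P \<in> Pts \<longleftrightarrow> (\<exists>i j. (i, j) \<in> Pidx \<and> P = (As!i, Bs!j))"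
  by (auto simp: Pts_def)

lemma Pidx_bnd: "(i, j) \<in> Pidx \<Longrightarrow> ap \<le> i \<and> i < length As \<and> bp \<le> j \<and> j < length Bs"
  by (auto simp: Pidx_def)

lemma W'_simps: "pts W' = Pts" "hls W' = hls W \<union> Hn" "vls W' = vls W \<union> Vn"
  by (simp_all add: W'_def pts_def hls_def vls_def)

lemma IW_mem: "f \<in> I_W W' \<longleftrightarrow> (\<forall>P\<in>Pts. f \<in> I_pt P) \<and> (\<forall>a\<in>hls W \<union> Hn. f \<in> ideal_gen {Hf a}) \<and>
    (\<forall>b\<in>vls W \<union> Vn. f \<in> ideal_gen {Vf b})"
  unfolding I_W_def W'_simps by blast

lemma IW: "I_W W' = {Lambda W * g | g. g \<in> Q}"
proof
  show "I_W W' \<subseteq> {Lambda W * g | g. g \<in> Q}"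
  proof
    fix f assume f: "f \<in> I_W W'"
    have fH: "\<And>a. a \<in> hls W \<union> Hn \<Longrightarrow> f \<in> ideal_gen {Hf a}"
      and fV: "\<And>b. b \<in> vls W \<union> Vn \<Longrightarrow> f \<in> ideal_gen {Vf b}"
      and fP: "\<And>P. P \<in> Pts \<Longrightarrow> f \<in> I_pt P"
      using f unfolding IW_mem by blast+
    obtain g where g: "f = Lambda W * g" using Lam_div[OF W] fH fV by blast
    have "g \<in> Q" unfolding Q_def
    proof (intro CollectI conjI allI impI)
      fix i assume i: "i < ap"
      then have il: "i < length As" using ap_le by simp
      have "Lambda W \<notin> ideal_gen {Hf (As!i)}"
      proof (rule Lam_notin[OF W prime_H[OF vA[OF il]]])
        show "1 \<notin> ideal_gen {Hf (As!i)}" by (rule one_notin) auto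
        show "Hf a \<notin> ideal_gen {Hf (As!i)}" if "a \<in> hls W" for a using nH_H np_H[OF il that] by blast
        show "Vf b \<notin> ideal_gen {Hf (As!i)}" if "b \<in> vls W" for b
          using nV_H W that by (auto simp: valid_lp_def)
      qed
      moreover have "As!i \<in> Hn" using i by (auto simp: Hn_def)
      then have "Lambda W * g \<in> ideal_gen {Hf (As!i)}" using fH g by auto
      ultimately show "g \<in> ideal_gen {Hf (As!i)}" using prime_cancel prime_H[OF vA[OF il]] by blast
    next
      fix j assume j: "j < bp"
      then have jl: "j < length Bs" using bp_le by simp
      have "Lambda W \<notin> ideal_gen {Vf (Bs!j)}"
      proof (rule Lam_notin[OF W prime_V[OF vB[OF jl]]])
        show "1 \<notin> ideal_gen {Vf (Bs!j)}" by (rule one_notin) auto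
        show "Vf b \<notin> ideal_gen {Vf (Bs!j)}" if "b \<in> vls W" for b using nV_V np_V[OF jl that] by blast
        show "Hf a \<notin> ideal_gen {Vf (Bs!j)}" if "a \<in> hls W" for a
          using nH_V W that by (auto simp: valid_lp_def)
      qed
      moreover have "Bs!j \<in> Vn" using j by (auto simp: Vn_def)
      then have "Lambda W * g \<in> ideal_gen {Vf (Bs!j)}" using fV g by auto
      ultimately show "g \<in> ideal_gen {Vf (Bs!j)}" using prime_cancel prime_V[OF vB[OF jl]] by blast
    next
      fix i j assume ij: "(i, j) \<in> Pidx"
      then have il: "i < length As" and jl: "j < length Bs" by (auto simp: Pidx_def)
      have pr: "prime_ideal (I_pt (As!i, Bs!j))" using pPt[OF dA dB il jl] .
      have "Lambda W \<notin> I_pt (As!i, Bs!j)"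
      proof (rule Lam_notin[OF W pr])
        show "1 \<notin> I_pt (As!i, Bs!j)" unfolding I_pt_simp by (rule one_notin) auto
        show "Hf a \<notin> I_pt (As!i, Bs!j)" if "a \<in> hls W" for a
          unfolding I_pt_simp using nH_HV np_H[OF il that] by blast
        show "Vf b \<notin> I_pt (As!i, Bs!j)" if "b \<in> vls W" for b
          unfolding I_pt_simp using nV_HV np_V[OF jl that] by blast
      qed
      moreover have "(As!i, Bs!j) \<in> Pts" using ij Pts_iff by blast
      then have "Lambda W * g \<in> I_pt (As!i, Bs!j)" using fP g by auto
      ultimately show "g \<in> I_pt (As!i, Bs!j)" using prime_cancel pr by blast
    qed
    then show "f \<in> {Lambda W * g | g. g \<in> Q}" using g by blast
  qed
next
  show "{Lambda W * g | g. g \<in> Q} \<subseteq> I_W W'"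
  proof
    fix f assume "f \<in> {Lambda W * g | g. g \<in> Q}"
    then obtain g where g: "f = Lambda W * g" "g \<in> Q" by blast
    have H: "f \<in> ideal_gen {Hf a}" if aa: "a \<in> hls W \<union> Hn" for a
    proof (cases "a \<in> hls W")
      case True
      have "Hf a dvd (\<Prod>a\<in>hls W. Hf a)"
        using True W by (intro dvd_prodI) (auto simp: valid_lp_def)
      then have "Hf a dvd Lambda W" unfolding Lambda_def by (rule dvd_mult2)
      then show ?thesis using g by (auto simp: in_ideal_single)
    next
      case False
      then obtain i where i: "i < ap" "a = As!i" using aa by (auto simp: Hn_def)
      then have "g \<in> ideal_gen {Hf a}" using g by (auto simp: Q_def)
      then show ?thesis using g by (simp add: ideal_gen_simps)
    qed
    have V: "f \<in> ideal_gen {Vf b}" if bb: "b \<in> vls W \<union> Vn" for b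
    proof (cases "b \<in> vls W")
      case True
      have "Vf b dvd (\<Prod>b\<in>vls W. Vf b)"
        using True W by (intro dvd_prodI) (auto simp: valid_lp_def)
      then have "Vf b dvd Lambda W" unfolding Lambda_def by (rule dvd_mult)
      then show ?thesis using g by (auto simp: in_ideal_single)
    next
      case False
      then obtain j where j: "j < bp" "b = Bs!j" using bb by (auto simp: Vn_def)
      then have "g \<in> ideal_gen {Vf b}" using g by (auto simp: Q_def)
      then show ?thesis using g by (simp add: ideal_gen_simps)
    qed
    have P: "f \<in> I_pt P" if "P \<in> Pts" for P
    proof -
      obtain i j where "(i, j) \<in> Pidx" "P = (As!i, Bs!j)" using \<open>P \<in> Pts\<close> by (auto simp: Pts_def)
      then have "g \<in> I_pt P" using g by (auto simp: Q_def)
      then show ?thesis using g by (simp add: I_pt_def ideal_gen_simps)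
    qed
    show "f \<in> I_W W'" unfolding IW_mem using H V P by blast
  qed
qed

lemma valid': "valid_lp W'"
proof -
  have fW: "finite (pts W)" "finite (hls W)" "finite (vls W)" using W by (auto simp: valid_lp_def)
  have finP: "finite Pts"
  proof -
    have "Pidx \<subseteq> {..<length As} \<times> {..<length Bs}" by (auto simp: Pidx_def)
    then have "finite Pidx" by (rule finite_subset) auto
    then show ?thesis by (simp add: Pts_def)
  qed
  have "finite Hn" "finite Vn" by (simp_all add: Hn_def Vn_def)
  note fins = finP this fW
  have vP: "\<forall>P\<in>Pts. valid_p1 (fst P) \<and> valid_p1 (snd P)"
    using vA vB by (auto simp: Pts_def Pidx_def)
  have vH: "\<forall>a\<in>hls W \<union> Hn. valid_p1 a" using W vA ap_le by (auto simp: valid_lp_def Hn_def)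
  have vV: "\<forall>b\<in>vls W \<union> Vn. valid_p1 b" using W vB bp_le by (auto simp: valid_lp_def Vn_def)
  have dP: "\<forall>P\<in>Pts. \<forall>P'\<in>Pts. P \<noteq> P' \<longrightarrow> \<not> (proj_eq (fst P) (fst P') \<and> proj_eq (snd P) (snd P'))"
  proof (intro ballI impI)
    fix P P' assume P: "P \<in> Pts" "P' \<in> Pts" "P \<noteq> P'"
    obtain i j i' j' where ij: "(i, j) \<in> Pidx" "P = (As!i, Bs!j)" "(i', j') \<in> Pidx" "P' = (As!i', Bs!j')"
      using P(1,2) by (auto simp: Pts_def)
    have "i \<noteq> i' \<or> j \<noteq> j'" using ij P(3) by auto
    then show "\<not> (proj_eq (fst P) (fst P') \<and> proj_eq (snd P) (snd P'))"
      using dl_np[OF dA] dl_np[OF dB] ij Pidx_bnd by (metis fst_conv snd_conv)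
  qed
  have dH: "\<forall>a\<in>hls W \<union> Hn. \<forall>a'\<in>hls W \<union> Hn. a \<noteq> a' \<longrightarrow> \<not> proj_eq a a'"
  proof (intro ballI impI)
    fix a a' assume a: "a \<in> hls W \<union> Hn" "a' \<in> hls W \<union> Hn" "a \<noteq> a'"
    show "\<not> proj_eq a a'"
    proof (cases "a \<in> hls W")
      case True
      show ?thesis
      proof (cases "a' \<in> hls W")
        case True then show ?thesis using \<open>a \<in> hls W\<close> a(3) W by (auto simp: valid_lp_def)
      next
        case False
        then obtain i where "i < ap" "a' = As!i" using a(2) by (auto simp: Hn_def)
        then show ?thesis using np_H(2)[OF _ True] ap_le by simp
      qed
    next
      case False
      then obtain i where i: "i < ap" "a = As!i" using a(1) by (auto simp: Hn_def)
      show ?thesis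
      proof (cases "a' \<in> hls W")
        case True then show ?thesis using np_H(1)[OF _ True] i ap_le by simp
      next
        case False
        then obtain i' where "i' < ap" "a' = As!i'" using a(2) by (auto simp: Hn_def)
        then show ?thesis using i a(3) dl_np[OF dA, of i i'] ap_le by auto
      qed
    qed
  qed
  have dV: "\<forall>b\<in>vls W \<union> Vn. \<forall>b'\<in>vls W \<union> Vn. b \<noteq> b' \<longrightarrow> \<not> proj_eq b b'"
  proof (intro ballI impI)
    fix a a' assume a: "a \<in> vls W \<union> Vn" "a' \<in> vls W \<union> Vn" "a \<noteq> a'"
    show "\<not> proj_eq a a'"
    proof (cases "a \<in> vls W")
      case True
      show ?thesis
      proof (cases "a' \<in> vls W")
        case True then show ?thesis using \<open>a \<in> vls W\<close> a(3) W by (auto simp: valid_lp_def)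
      next
        case False
        then obtain i where "i < bp" "a' = Bs!i" using a(2) by (auto simp: Vn_def)
        then show ?thesis using np_V(2)[OF _ True] bp_le by simp
      qed
    next
      case False
      then obtain i where i: "i < bp" "a = Bs!i" using a(1) by (auto simp: Vn_def)
      show ?thesis
      proof (cases "a' \<in> vls W")
        case True then show ?thesis using np_V(1)[OF _ True] i bp_le by simp
      next
        case False
        then obtain i' where "i' < bp" "a' = Bs!i'" using a(2) by (auto simp: Vn_def)
        then show ?thesis using i a(3) dl_np[OF dB, of i i'] bp_le by auto
      qed
    qed
  qed
  have pH: "\<forall>P\<in>Pts. \<forall>a\<in>hls W \<union> Hn. \<not> proj_eq (fst P) a"
  proof (intro ballI)
    fix P a assume P: "P \<in> Pts" and a: "a \<in> hls W \<union> Hn"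
    obtain i j where ij: "(i, j) \<in> Pidx" "P = (As!i, Bs!j)" using P by (auto simp: Pts_def)
    show "\<not> proj_eq (fst P) a"
    proof (cases "a \<in> hls W")
      case True then show ?thesis using np_H(1)[OF _ True] ij Pidx_bnd by auto
    next
      case False
      then obtain i' where "i' < ap" "a = As!i'" using a by (auto simp: Hn_def)
      moreover have "ap \<le> i" "i < length As" using ij Pidx_bnd by auto
      ultimately show ?thesis using ij dl_np[OF dA, of i i'] ap_le by auto
    qed
  qed
  have pV: "\<forall>P\<in>Pts. \<forall>b\<in>vls W \<union> Vn. \<not> proj_eq (snd P) b"
  proof (intro ballI)
    fix P a assume P: "P \<in> Pts" and a: "a \<in> vls W \<union> Vn"
    obtain i j where ij: "(i, j) \<in> Pidx" "P = (As!i, Bs!j)" using P by (auto simp: Pts_def)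
    show "\<not> proj_eq (snd P) a"
    proof (cases "a \<in> vls W")
      case True then show ?thesis using np_V(1)[OF _ True] ij Pidx_bnd by auto
    next
      case False
      then obtain j' where "j' < bp" "a = Bs!j'" using a by (auto simp: Vn_def)
      moreover have "bp \<le> j" "j < length Bs" using ij Pidx_bnd by auto
      ultimately show ?thesis using ij dl_np[OF dB, of j j'] bp_le by auto
    qed
  qed
  have e: "pts W' = Pts" "hls W' = hls W \<union> Hn" "vls W' = vls W \<union> Vn"
    by (simp_all add: W'_def pts_def hls_def vls_def)
  show ?thesis unfolding valid_lp_def e
  proof (intro conjI)
    show "finite Pts" "finite (hls W \<union> Hn)" "finite (vls W \<union> Vn)" using fins by simp_all
  qed (fact vP vH vV dP dH dV pH pV)+
qed

end

lemma exists_c: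
  assumes "finite A" "\<forall>a\<in>A. valid_p1 a"
  shows "\<exists>c. valid_p1 c \<and> (\<forall>a\<in>A. \<not> proj_eq c a \<and> \<not> proj_eq a c)"
proof -
  have "infinite (UNIV :: complex set)" by (rule infinite_UNIV_char_0)
  then obtain t :: complex where t: "t \<notin> (\<lambda>a. snd a / fst a) ` A"
    using ex_new_if_finite[of "(\<lambda>a. snd a / fst a) ` A"] assms(1) by blast
  have "\<not> proj_eq (1, t) a \<and> \<not> proj_eq a (1, t)" if a: "a \<in> A" for a
  proof (cases "fst a = 0")
    case True
    then have "snd a \<noteq> 0" using assms(2) a by (cases a) (auto simp: valid_p1_def)
    then show ?thesis using True by (simp add: proj_eq_def)
  next
    case False
    have "t \<noteq> snd a / fst a" using t a by blast
    then have "snd a \<noteq> t * fst a" using False by (simp add: field_simps)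
    then show ?thesis by (auto simp: proj_eq_def mult.commute)
  qed
  moreover have "valid_p1 (1, t)" by (simp add: valid_p1_def)
  ultimately show ?thesis by blast
qed

lemma homog_L2:
  assumes "v1 \<noteq> v2" "u \<noteq> 0 \<or> w \<noteq> 0"
  shows "homog_pos (L2 v1 v2 u w)"
  unfolding homog_pos_def
proof
  show "L2 v1 v2 u w \<noteq> 0" using assms L2_eq_0_iff by blast
  have e: "L2 v1 v2 u w = Poly_Mapping.single (Poly_Mapping.single v1 1) u + Poly_Mapping.single (Poly_Mapping.single v2 1) w"
    by (simp add: L2_def Const_Var)
  have k: "Poly_Mapping.keys (L2 v1 v2 u w) \<subseteq> {Poly_Mapping.single v1 1, Poly_Mapping.single v2 1}"
    unfolding e using keys_add[of "Poly_Mapping.single (Poly_Mapping.single v1 1) u" "Poly_Mapping.single (Poly_Mapping.single v2 (1::nat)) w"]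
    by (auto split: if_splits)
  have t: "tdeg (Poly_Mapping.single v 1) = 1" for v by (cases v) (simp_all add: tdeg_def lookup_single)
  show "\<exists>d>0. \<forall>m\<in>Poly_Mapping.keys (L2 v1 v2 u w). tdeg m = d"
    using k t by (intro exI[of _ 1]) auto
qed

lemma homog_Hf: "valid_p1 a \<Longrightarrow> homog_pos (Hf a)"
  by (cases a) (auto simp: Hf_L2 valid_p1_def intro!: homog_L2)
lemma homog_Vf: "valid_p1 a \<Longrightarrow> homog_pos (Vf a)"
  by (cases a) (auto simp: Vf_L2 valid_p1_def intro!: homog_L2)

lemma dist_drop: "dist_list As \<Longrightarrow> dist_list (drop n As)"
  unfolding dist_list_def by (auto dest: in_set_dropD simp: nth_drop)

lemma is_ideal_I_pt: "is_ideal (I_pt P)" by (simp add: I_pt_def ideal_gen_is_ideal)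

lemma is_ideal_inter: "(\<And>P. P \<in> X \<Longrightarrow> is_ideal (I P)) \<Longrightarrow> is_ideal {f. \<forall>P\<in>X. f \<in> I P}"
  by (rule is_idealI) (auto simp: ideal_0 ideal_add ideal_mult)

context core
begin

definition "As' = drop ap As"
definition "Bs' = drop bp Bs"
definition "S2 = (\<lambda>(s, t). (max (fst s) (fst t) - ap, max (snd s) (snd t) - bp)) ` (SA \<times> SB)"

lemma IX_mem: "f \<in> I_X Pts \<longleftrightarrow> (\<forall>P\<in>Pts. f \<in> I_pt P)"
  by (simp add: I_X_def I_W_def pts_def hls_def vls_def)

lemma dA': "dist_list As'" by (simp add: As'_def dist_drop dA)
lemma dB': "dist_list Bs'" by (simp add: Bs'_def dist_drop dB)

lemma As'_nth: "i < length As' \<Longrightarrow> As'!i = As!(ap + i)" by (simp add: As'_def nth_drop)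
lemma Bs'_nth: "j < length Bs' \<Longrightarrow> Bs'!j = Bs!(bp + j)" by (simp add: Bs'_def nth_drop)
lemma len_As': "length As' = length As - ap" by (simp add: As'_def)
lemma len_Bs': "length Bs' = length Bs - bp" by (simp add: Bs'_def)

lemma mH'_in: "i < x \<Longrightarrow> ap \<le> i \<Longrightarrow> i < length As \<Longrightarrow> mH As' 0 (x - ap) \<in> ideal_gen {Hf (As!i)}"
  using mH_in_H[of 0 "i - ap" "x - ap" As'] As'_nth[of "i - ap"] len_As' by auto

lemma mV'_in: "j < y \<Longrightarrow> bp \<le> j \<Longrightarrow> j < length Bs \<Longrightarrow> mV Bs' (y - bp) \<in> ideal_gen {Vf (Bs!j)}"
  using mV_in_V[of "j - bp" "y - bp" Bs'] Bs'_nth[of "j - bp"] len_Bs' by auto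

lemma gen_in_pt:
  assumes ij: "(i, j) \<in> Pidx" and s: "s \<in> SA" and t: "t \<in> SB"
  shows "mm As' Bs' 0 (max (fst s) (fst t) - ap, max (snd s) (snd t) - bp) \<in> I_pt (As!i, Bs!j)"
proof -
  have b: "ap \<le> i" "i < length As" "bp \<le> j" "j < length Bs" using Pidx_bnd[OF ij] by auto
  have "undom SA i j \<or> undom SB i j" using ij by (auto simp: Pidx_def)
  then have "i < max (fst s) (fst t) \<or> j < max (snd s) (snd t)"
    using s t unfolding undom_def by force
  then show ?thesis
  proof
    assume "i < max (fst s) (fst t)"
    from mH'_in[OF this b(1,2)]
    have "mH As' 0 (max (fst s) (fst t) - ap) \<in> I_pt (As!i, Bs!j)"
      using H_pt_sub by blast
    then show ?thesis by (simp add: mm_def I_pt_def ideal_gen_simps(4))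
  next
    assume "j < max (snd s) (snd t)"
    from mV'_in[OF this b(3,4)]
    have "mV Bs' (max (snd s) (snd t) - bp) \<in> I_pt (As!i, Bs!j)"
      using V_pt_sub by blast
    then show ?thesis by (simp add: mm_def I_pt_def ideal_gen_simps(3))
  qed
qed

lemma IXeq: "I_X Pts = ideal_gen (mm As' Bs' 0 ` S2)"
proof
  show "ideal_gen (mm As' Bs' 0 ` S2) \<subseteq> I_X Pts"
  proof (rule ideal_gen_least)
    have "I_X Pts = {f. \<forall>P\<in>Pts. f \<in> I_pt P}" using IX_mem by blast
    then show "is_ideal (I_X Pts)"
      using is_ideal_inter[of Pts I_pt] is_ideal_I_pt by simp
    show "mm As' Bs' 0 ` S2 \<subseteq> I_X Pts"
    proof
      fix x assume "x \<in> mm As' Bs' 0 ` S2"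
      then obtain s t where st: "s \<in> SA" "t \<in> SB"
        "x = mm As' Bs' 0 (max (fst s) (fst t) - ap, max (snd s) (snd t) - bp)"
        by (auto simp: S2_def)
      show "x \<in> I_X Pts" unfolding IX_mem
      proof
        fix P assume "P \<in> Pts"
        then obtain i j where "(i, j) \<in> Pidx" "P = (As!i, Bs!j)" by (auto simp: Pts_def)
        then show "x \<in> I_pt P" using gen_in_pt st by simp
      qed
    qed
  qed
next
  show "I_X Pts \<subseteq> ideal_gen (mm As' Bs' 0 ` S2)"
  proof
    fix f assume f: "f \<in> I_X Pts"
    have fin: "finite S2" using finA finB by (simp add: S2_def)
    have ne: "S2 \<noteq> {}" using neA neB by (simp add: S2_def)
    obtain sA where sA: "sA \<in> SA" "fst sA = Min (fst ` SA)" using minA(1) by auto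
    obtain tB where tB: "tB \<in> SB" "fst tB = Min (fst ` SB)" using minB(1) by auto
    obtain sA' where sA': "sA' \<in> SA" "snd sA' = Min (snd ` SA)" using minA(2) by auto
    obtain tB' where tB': "tB' \<in> SB" "snd tB' = Min (snd ` SB)" using minB(2) by auto
    have u1: "(max (fst sA) (fst tB) - ap, max (snd sA) (snd tB) - bp) \<in> S2"
      using sA tB by (force simp: S2_def)
    have u2: "(max (fst sA') (fst tB') - ap, max (snd sA') (snd tB') - bp) \<in> S2"
      using sA' tB' by (force simp: S2_def)
    have m1: "Min (fst ` S2) = 0"
    proof -
      have "Min (fst ` S2) \<le> max (fst sA) (fst tB) - ap"
        using fin u1 by (metis Min_le finite_imageI fst_conv image_eqI)
      then show ?thesis using sA tB by (simp add: ap_def)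
    qed
    have m2: "Min (snd ` S2) = 0"
    proof -
      have "Min (snd ` S2) \<le> max (snd sA') (snd tB') - bp"
        using fin u2 by (metis Min_le finite_imageI snd_conv image_eqI)
      then show ?thesis using sA' tB' by (simp add: bp_def)
    qed
    have bnd: "\<forall>s\<in>S2. 0 \<le> fst s \<and> fst s \<le> length As' \<and> snd s \<le> length Bs'"
      using bndA bndB by (auto simp: S2_def len_As' len_Bs' diff_le_mono)
    show "f \<in> ideal_gen (mm As' Bs' 0 ` S2)"
    proof (rule thmT[OF dA' dB' fin ne bnd])
      show "\<forall>i. 0 \<le> i \<longrightarrow> i < Min (fst ` S2) \<longrightarrow> f \<in> ideal_gen {Hf (As'!i)}" using m1 by simp
      show "\<forall>j. j < Min (snd ` S2) \<longrightarrow> f \<in> ideal_gen {Vf (Bs'!j)}" using m2 by simp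
      show "\<forall>i j. 0 \<le> i \<longrightarrow> i < length As' \<longrightarrow> j < length Bs' \<longrightarrow> (\<forall>s\<in>S2. i < fst s \<or> j < snd s) \<longrightarrow>
          f \<in> I_pt (As'!i, Bs'!j)"
      proof (intro allI impI)
        fix i j assume ij: "0 \<le> i" "i < length As'" "j < length Bs'" "\<forall>s\<in>S2. i < fst s \<or> j < snd s"
        have "undom SA (ap + i) (bp + j) \<or> undom SB (ap + i) (bp + j)"
        proof (rule ccontr)
          assume "\<not> (undom SA (ap + i) (bp + j) \<or> undom SB (ap + i) (bp + j))"
          then obtain s t where s: "s \<in> SA" "fst s \<le> ap + i" "snd s \<le> bp + j"
            and t: "t \<in> SB" "fst t \<le> ap + i" "snd t \<le> bp + j"
            unfolding undom_def by (auto simp: not_less)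
          have "(max (fst s) (fst t) - ap, max (snd s) (snd t) - bp) \<in> S2" using s t by (force simp: S2_def)
          then show False using ij(4) s t by fastforce
        qed
        then have "(ap + i, bp + j) \<in> Pidx" using ij len_As' len_Bs' by (auto simp: Pidx_def)
        then have "(As!(ap + i), Bs!(bp + j)) \<in> Pts" using Pts_iff by blast
        then have "f \<in> I_pt (As!(ap + i), Bs!(bp + j))" using f IX_mem by blast
        then show "f \<in> I_pt (As'!i, Bs'!j)" using As'_nth[OF ij(2)] Bs'_nth[OF ij(3)] by simp
      qed
    qed
  qed
qed

lemma ACM': "ACM Pts"
proof (cases "Pts = {}")
  case True
  then have "I_X Pts = UNIV" using IX_mem by blast
  then show ?thesis by (simp add: ACM_def CM_points_ideal_def)
next
  case False
  then obtain P0 where P0: "P0 \<in> Pts" by blast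
  obtain c where c: "valid_p1 c" "\<forall>a\<in>set As. \<not> proj_eq c a \<and> \<not> proj_eq a c"
    using exists_c[of "set As"] dA by (auto simp: dist_list_def)
  obtain d where d: "valid_p1 d" "\<forall>a\<in>set Bs. \<not> proj_eq d a \<and> \<not> proj_eq a d"
    using exists_c[of "set Bs"] dB by (auto simp: dist_list_def)
  have cAs: "\<not> proj_eq c (As'!i)" if "i < length As'" for i
    using c that by (simp add: As'_def)
  have dBsl: "\<not> proj_eq (Bs'!j) d" if "j < length Bs'" for j
    using d that by (simp add: Bs'_def)
  have nz1: "nzd_mod (I_X Pts) (Hf c)"
    unfolding nzd_mod_def
  proof (intro allI impI)
    fix g assume g: "Hf c * g \<in> I_X Pts"
    show "g \<in> I_X Pts" unfolding IX_mem
    proof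
      fix P assume "P \<in> Pts"
      then obtain i j where ij: "(i, j) \<in> Pidx" "P = (As!i, Bs!j)" by (auto simp: Pts_def)
      have il: "i < length As" "j < length Bs" using Pidx_bnd[OF ij(1)] by auto
      have "Hf c * g \<in> I_pt P" using g \<open>P \<in> Pts\<close> IX_mem by blast
      moreover have "Hf c \<notin> I_pt P" unfolding ij(2) I_pt_simp
        using nH_HV c(2) nth_mem[OF il(1)] by blast
      ultimately show "g \<in> I_pt P" using prime_cancel pPt[OF dA dB il] ij(2) by blast
    qed
  qed
  have e: "ideal_gen (I_X Pts \<union> {Hf c}) = ideal_gen (insert (Hf c) (mm As' Bs' 0 ` S2))"
    unfolding IXeq ideal_gen_idem by (simp add: insert_commute)
  have nz2: "nzd_mod (ideal_gen (I_X Pts \<union> {Hf c})) (Vf d)"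
    unfolding nzd_mod_def e
  proof (intro allI impI)
    fix q assume q: "Vf d * q \<in> ideal_gen (insert (Hf c) (mm As' Bs' 0 ` S2))"
    have fin: "finite S2" using finA finB by (simp add: S2_def)
    have ne: "S2 \<noteq> {}" using neA neB by (simp add: S2_def)
    have bnd: "\<forall>s\<in>S2. 0 \<le> fst s \<and> fst s \<le> length As' \<and> snd s \<le> length Bs'"
      using bndA bndB by (auto simp: S2_def len_As' len_Bs' diff_le_mono)
    show "q \<in> ideal_gen (insert (Hf c) (mm As' Bs' 0 ` S2))"
      by (rule thmN[OF dA' dB' c(1) d(1) cAs dBsl fin ne bnd q])
  qed
  have ne1: "ideal_gen (I_X Pts \<union> {Hf c, Vf d}) \<noteq> UNIV"
  proof -
    have "1 \<notin> ideal_gen (I_X Pts \<union> {Hf c, Vf d})"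
    proof (rule one_notin)
      fix s assume s: "s \<in> I_X Pts \<union> {Hf c, Vf d}"
      show "ev zero_ev s = 0"
      proof (cases "s \<in> I_X Pts")
        case True
        then have "s \<in> I_pt P0" using P0 IX_mem by blast
        then show ?thesis unfolding I_pt_def by (rule ev_kill) auto
      next
        case False then show ?thesis using s by auto
      qed
    qed
    then show ?thesis by blast
  qed
  show ?thesis unfolding ACM_def CM_points_ideal_def
    using homog_Hf[OF c(1)] homog_Vf[OF d(1)] nz1 nz2 ne1 by blast
qed

lemma core_result:
  "union_lines_ACM_points W' \<and>
   {Lambda W * k | k. k \<in> MA} \<inter> {Lambda W * k | k. k \<in> MB} = I_W W'"
proof
  show "union_lines_ACM_points W'"
    unfolding union_lines_ACM_points_def using valid' ACM' W'_simps by simp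
  show "{Lambda W * k | k. k \<in> MA} \<inter> {Lambda W * k | k. k \<in> MB} = I_W W'"
    using Lam_inter[OF Lam_nz[OF W], of MA MB] MQ IW by simp
qed

end

lemma gl_dist: "good_labelling X pr As \<Longrightarrow> dist_list As"
  by (simp add: good_labelling_def dist_list_def)

lemma gl_comp: "good_labelling X pr As \<Longrightarrow> i < length As \<Longrightarrow> \<exists>P\<in>X. proj_eq (pr P) (As!i)"
  unfolding good_labelling_def using nth_mem by blast

lemma alpha_le:
  assumes W: "valid_lp W" and gA: "good_labelling (pts W) fst As" and gB: "good_labelling (pts W) snd Bs"
    and i: "i < length As"
  shows "alpha (pts W) As i \<le> length Bs"
proof -
  let ?X = "pts W"
  let ?T = "{P\<in>?X. proj_eq (fst P) (As!i)}"
  have finX: "finite ?X" using W by (simp add: valid_lp_def)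
  have va: "valid_p1 (As!i)" using gl_dist[OF gA] i dl_valid by blast
  have ex: "\<exists>j. j < length Bs \<and> proj_eq (snd P) (Bs!j)" if PX: "P \<in> ?X" for P
  proof -
    have "\<forall>P\<in>pts W. \<exists>b\<in>set Bs. proj_eq (snd P) b" using gB unfolding good_labelling_def by (elim conjE)
    then obtain b where "b \<in> set Bs" "proj_eq (snd P) b" using PX by blast
    then obtain j where "j < length Bs" "Bs!j = b" by (meson in_set_conv_nth)
    then show ?thesis using \<open>proj_eq (snd P) b\<close> by blast
  qed
  define \<phi> where "\<phi> P = (SOME j. j < length Bs \<and> proj_eq (snd P) (Bs!j))" for P :: "p1 \<times> p1"
  have \<phi>: "\<phi> P < length Bs \<and> proj_eq (snd P) (Bs!(\<phi> P))" if "P \<in> ?X" for P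
    unfolding \<phi>_def using someI_ex[OF ex[OF that]] .
  have "inj_on \<phi> ?T"
  proof (rule inj_onI)
    fix P Q assume P: "P \<in> ?T" and Q: "Q \<in> ?T" and e: "\<phi> P = \<phi> Q"
    have PX: "P \<in> ?X" and QX: "Q \<in> ?X" using P Q by auto
    have h1: "proj_eq (snd P) (Bs!(\<phi> P))" using \<phi>[OF PX] by blast
    have h2: "proj_eq (snd Q) (Bs!(\<phi> P))" using \<phi>[OF QX] e by simp
    have vb: "valid_p1 (Bs!(\<phi> P))" using gl_dist[OF gB] \<phi>[OF PX] dl_valid by blast
    have s: "proj_eq (snd P) (snd Q)" by (rule proj_eq_trans[OF h1 proj_eq_sym[OF h2] vb])
    have f1: "proj_eq (fst P) (As!i)" and f2: "proj_eq (fst Q) (As!i)" using P Q by auto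
    have f: "proj_eq (fst P) (fst Q)" by (rule proj_eq_trans[OF f1 proj_eq_sym[OF f2] va])
    have dist: "\<forall>P\<in>pts W. \<forall>Q\<in>pts W. P \<noteq> Q \<longrightarrow> \<not> (proj_eq (fst P) (fst Q) \<and> proj_eq (snd P) (snd Q))"
      using W unfolding valid_lp_def by (elim conjE)
    show "P = Q" using dist PX QX s f by blast
  qed
  moreover have "\<phi> ` ?T \<subseteq> {..<length Bs}" using \<phi> by auto
  ultimately have "card ?T \<le> card {..<length Bs}" by (intro card_inj_on_le) auto
  then show ?thesis by (simp add: alpha_def)
qed

theorem theorem4p8:
  fixes W :: lp and G A B :: "poly set"
  assumes "union_lines_ACM_points W"
    and "standard_gens W G"
    and "A \<union> B = G" and "A \<inter> B = {}" and "A \<noteq> {}" and "B \<noteq> {}"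
  shows "\<exists>W'. union_lines_ACM_points W' \<and> ideal_gen A \<inter> ideal_gen B = I_W W'"
proof -
  have W: "valid_lp W" using assms(1) by (simp add: union_lines_ACM_points_def)
  obtain As Bs where gA: "good_labelling (pts W) fst As" and gB: "good_labelling (pts W) snd Bs"
    and G: "G = (\<lambda>f. Lambda W * f) ` gens_X (pts W) As Bs"
    using assms(2) unfolding standard_gens_def by blast
  let ?\<alpha> = "alpha (pts W) As"
  define C where "C = {i. 0 < i \<and> i < length As \<and> ?\<alpha> i < ?\<alpha> (i - 1)}"
  define S0 where "S0 = {(length As, 0), (0, length Bs)} \<union> (\<lambda>i. (i, ?\<alpha> i)) ` C"
  have gens: "gens_X (pts W) As Bs = mm As Bs 0 ` S0"
  proof -
    have e: "mm As Bs 0 (a, b) = (\<Prod>k<a. Hf (As!k)) * (\<Prod>k<b. Vf (Bs!k))" for a b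
      by (simp add: mm_def mH_def mV_def atLeast0LessThan)
    have i1: "mm As Bs 0 ` (\<lambda>i. (i, ?\<alpha> i)) ` C = (\<lambda>i. (\<Prod>k<i. Hf (As!k)) * (\<Prod>k<?\<alpha> i. Vf (Bs!k))) ` C"
      unfolding image_image e ..
    show ?thesis unfolding gens_X_def S0_def image_Un setcompr_eq_image i1
      by (simp add: e C_def)
  qed
  have finS0: "finite S0"
  proof -
    have "C \<subseteq> {..<length As}" by (auto simp: C_def)
    then have "finite C" by (rule finite_subset) auto
    then show ?thesis unfolding S0_def by simp
  qed
  have bnd0: "fst s \<le> length As \<and> snd s \<le> length Bs" if "s \<in> S0" for s
    using that alpha_le[OF W gA gB] by (auto simp: S0_def C_def)
  define SA where "SA = {s\<in>S0. Lambda W * mm As Bs 0 s \<in> A}"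
  define SB where "SB = {s\<in>S0. Lambda W * mm As Bs 0 s \<in> B}"
  have G': "G = (\<lambda>s. Lambda W * mm As Bs 0 s) ` S0" using G gens by auto
  have A: "A = (\<lambda>s. Lambda W * mm As Bs 0 s) ` SA" using assms(3) G' by (auto simp: SA_def)
  have B: "B = (\<lambda>s. Lambda W * mm As Bs 0 s) ` SB" using assms(3) G' by (auto simp: SB_def)
  have neA: "SA \<noteq> {}" using A assms(5) by auto
  have neB: "SB \<noteq> {}" using B assms(6) by auto
  have finA: "finite SA" and finB: "finite SB" using finS0 by (auto simp: SA_def SB_def)
  interpret core W As Bs SA SB
  proof
    show "valid_lp W" by (fact W)
    show "dist_list As" by (rule gl_dist[OF gA])
    show "dist_list Bs" by (rule gl_dist[OF gB])
    show "\<exists>P\<in>pts W. proj_eq (fst P) (As!i)" if "i < length As" for i using gl_comp[OF gA that] .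
    show "\<exists>P\<in>pts W. proj_eq (snd P) (Bs!j)" if "j < length Bs" for j using gl_comp[OF gB that] .
    show "finite SA" "SA \<noteq> {}" "finite SB" "SB \<noteq> {}" by (fact finA neA finB neB)+
    show "fst s \<le> length As \<and> snd s \<le> length Bs" if "s \<in> SA" for s using bnd0 that by (auto simp: SA_def)
    show "fst s \<le> length As \<and> snd s \<le> length Bs" if "s \<in> SB" for s using bnd0 that by (auto simp: SB_def)
  qed
  have iA: "ideal_gen A = {Lambda W * k | k. k \<in> MA}"
    unfolding A MA_def by (rule ideal_gen_Lam)
  have iB: "ideal_gen B = {Lambda W * k | k. k \<in> MB}"
    unfolding B MB_def by (rule ideal_gen_Lam)
  show ?thesis using core_result iA iB by (intro exI[of _ W']) simp
qed

end
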